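(* Let $k$ be a field of characteristic zero and let $A=\bigoplus_{i\ge 0}A_i$ be a standard graded Artinian $k$-algebra. Then $A$ has the weak Lefschetz property (respectively, the strong Lefschetz property) if and only if there exists a linear form $l\in A_1$ such that the associated graded ring $Gr_{l}(A)$ has the weak Lefschetz property (respectively, the strong Lefschetz property).
   Context: For a linear form $l\in A_1$, let $r$ be the least integer with $l^r=0$. The associated graded ring of $A$ with respect to $l$ is $Gr_l(A)=A/(l)\oplus (l)/(l^2)\oplus\cdots\oplus (l^{r-1})/(l^r)$, with multiplication induced from $A$ and with the grading inherited from the grading of $A$. A finite graded module $M=\bigoplus_i M_i$ over a standard graded $k$-algebra $R$ (in particular $R$ itself) has the weak Lefschetz property (WLP) if there is a linear form $\ell\in R_1$ such that each multiplication map $\times\ell\colon M_i\to M_{i+1}$ has maximal rank (is injective or surjective); it has the strong Lefschetz property (SLP) if there is $\ell\in R_1$ such that $\times\ell^d\colon M_i\to M_{i+d}$ has maximal rank for all $d>0$ and all $i$. *)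

theory Defs
  imports Main "HOL.Vector_Spaces"
begin

text \<open>A k-algebra A is modelled by a type 'a of class comm_ring_1 together with a
  k-vector-space structure scale (k a type of class field) compatible with the
  multiplication.\<close>

definition ring_ideal :: "'a::comm_ring_1 set \<Rightarrow> bool" where
  "ring_ideal I \<longleftrightarrow> 0 \<in> I \<and> (\<forall>x\<in>I. \<forall>y\<in>I. x + y \<in> I) \<and> (\<forall>x\<in>I. \<forall>r. r * x \<in> I)"

definition artinian_ring :: "'a::comm_ring_1 itself \<Rightarrow> bool" where
  "artinian_ring _ \<longleftrightarrow>
     \<not> (\<exists>f :: nat \<Rightarrow> 'a set. \<forall>n. ring_ideal (f n) \<and> f (Suc n) \<subset> f n)"

definition k_algebra :: "('k::field \<Rightarrow> 'a::comm_ring_1 \<Rightarrow> 'a) \<Rightarrow> bool" where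
  "k_algebra scale \<longleftrightarrow> vector_space scale \<and> (\<forall>c x y. scale c (x * y) = scale c x * y)"

definition standard_graded_algebra ::
    "('k::field \<Rightarrow> 'a::comm_ring_1 \<Rightarrow> 'a) \<Rightarrow> (nat \<Rightarrow> 'a set) \<Rightarrow> bool" where
  "standard_graded_algebra scale A \<longleftrightarrow>
     k_algebra scale \<and> (1::'a) \<noteq> 0 \<and>
     (\<forall>i. module.subspace scale (A i)) \<and>
     (\<forall>x. \<exists>!c :: nat \<Rightarrow> 'a. (\<forall>i. c i \<in> A i) \<and> finite {i. c i \<noteq> 0} \<and>
            x = (\<Sum>i\<in>{i. c i \<noteq> 0}. c i)) \<and>
     (\<forall>i j. \<forall>x\<in>A i. \<forall>y\<in>A j. x * y \<in> A (i + j)) \<and>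
     A 0 = range (\<lambda>c. scale c 1) \<and>
     (\<exists>B. finite B \<and> module.span scale B = A 1) \<and>
     (\<forall>i. A (Suc i) = module.span scale {x * y | x y. x \<in> A 1 \<and> y \<in> A i})"

definition standard_graded_artinian_algebra ::
    "('k::field \<Rightarrow> 'a::comm_ring_1 \<Rightarrow> 'a) \<Rightarrow> (nat \<Rightarrow> 'a set) \<Rightarrow> bool" where
  "standard_graded_artinian_algebra scale A \<longleftrightarrow>
     standard_graded_algebra scale A \<and> artinian_ring TYPE('a)"

text \<open>A graded object is given by its graded pieces R i and its multiplication mult.\<close>

definition maximal_rank :: "('b \<Rightarrow> 'b) \<Rightarrow> 'b set \<Rightarrow> 'b set \<Rightarrow> bool" where
  "maximal_rank f S T \<longleftrightarrow> inj_on f S \<or> f ` S = T"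

definition WLP :: "(nat \<Rightarrow> 'b set) \<Rightarrow> ('b \<Rightarrow> 'b \<Rightarrow> 'b) \<Rightarrow> bool" where
  "WLP R mult \<longleftrightarrow> (\<exists>l\<in>R 1. \<forall>i. maximal_rank (mult l) (R i) (R (Suc i)))"

text \<open>Multiplication by l^d is the d-fold iterate of multiplication by l.\<close>
definition SLP :: "(nat \<Rightarrow> 'b set) \<Rightarrow> ('b \<Rightarrow> 'b \<Rightarrow> 'b) \<Rightarrow> bool" where
  "SLP R mult \<longleftrightarrow> (\<exists>l\<in>R 1. \<forall>d>0. \<forall>i. maximal_rank (mult l ^^ d) (R i) (R (i + d)))"

definition pideal :: "'a::comm_ring_1 \<Rightarrow> 'a set" where
  "pideal a = range (\<lambda>x. a * x)"

definition coset :: "'a::comm_ring_1 set \<Rightarrow> 'a \<Rightarrow> 'a set" where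
  "coset I x = (\<lambda>y. x + y) ` I"

text \<open>An element of Gr_l(A) = (+)_j (l^j)/(l^(j+1)) is represented canonically as the
  function j \<mapsto> (its component in (l^j)/(l^(j+1)), a coset of (l^(j+1))). Components for
  j \<ge> r (where l^r = 0) are the zero coset {0}.\<close>

definition gr_piece :: "(nat \<Rightarrow> 'a::comm_ring_1 set) \<Rightarrow> 'a \<Rightarrow> nat \<Rightarrow> nat \<Rightarrow> 'a set set" where
  "gr_piece A l j d = {coset (pideal (l ^ Suc j)) x | x. x \<in> pideal (l ^ j) \<and> x \<in> A d}"

definition gr_grade :: "(nat \<Rightarrow> 'a::comm_ring_1 set) \<Rightarrow> 'a \<Rightarrow> nat \<Rightarrow> (nat \<Rightarrow> 'a set) set" where
  "gr_grade A l d = {g. \<forall>j. g j \<in> gr_piece A l j d}"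

definition gr_rep :: "'a set \<Rightarrow> 'a" where
  "gr_rep S = (SOME x. x \<in> S)"

definition gr_mult :: "'a::comm_ring_1 \<Rightarrow> (nat \<Rightarrow> 'a set) \<Rightarrow> (nat \<Rightarrow> 'a set) \<Rightarrow> (nat \<Rightarrow> 'a set)" where
  "gr_mult l g h = (\<lambda>j. coset (pideal (l ^ Suc j))
        (\<Sum>a\<le>j. gr_rep (g a) * gr_rep (h (j - a))))"

end

theory Submission
  imports Defs "HOL-Library.Function_Algebras" "Jordan_Normal_Form.Determinant"
begin

lemma poly_det_hom: "det (map_mat (\<lambda>p. poly p t) M) = poly (det M) (t::'k::field)"
proof -
  interpret ph: comm_ring_hom "\<lambda>p. poly p t" by unfold_locales auto
  show ?thesis by (rule ph.hom_det)
qed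

lemma detsq:
  fixes EP :: "'p \<Rightarrow> 'p \<Rightarrow> 'k::field poly"
  assumes P: "finite P" and E0: "\<And>p p'. p \<in> P \<Longrightarrow> p' \<in> P \<Longrightarrow> poly (EP p p') 0 = (if p = p' then 1 else 0)"
  shows "\<exists>S. finite S \<and> (\<forall>t. t \<notin> S \<longrightarrow>
     (\<forall>z. (\<forall>p\<in>P. (\<Sum>p'\<in>P. poly (EP p p') t * z p') = 0) \<longrightarrow> (\<forall>p\<in>P. z p = 0)) \<and>
     (\<forall>y. \<exists>z. \<forall>p\<in>P. (\<Sum>p'\<in>P. poly (EP p p') t * z p') = y p))"
proof -
  obtain en where en: "bij_betw en {..<card P} P" using P ex_bij_betw_nat_finite lessThan_atLeast0 by metis
  define n where "n = card P"
  define M where "M = mat n n (\<lambda>(i,j). EP (en i) (en j))"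
  have Mc: "M \<in> carrier_mat n n" unfolding M_def by auto
  define Mt where "Mt t = map_mat (\<lambda>p. poly p t) M" for t
  have Mtc: "Mt t \<in> carrier_mat n n" for t unfolding Mt_def using Mc by auto
  have enP: "i < n \<Longrightarrow> en i \<in> P" for i using en unfolding n_def bij_betw_def by auto
  have detMt: "det (Mt t) = poly (det M) t" for t unfolding Mt_def by (rule poly_det_hom)
  have inj: "inj_on en {..<n}" using en unfolding bij_betw_def n_def by auto
  have M0: "Mt 0 = 1\<^sub>m n"
  proof (rule eq_matI)
    fix i j assume "i < dim_row (1\<^sub>m n)" "j < dim_col (1\<^sub>m n)"
    hence ij: "i < n" "j < n" by auto
    have "(en i = en j) = (i = j)" using inj ij by (auto simp: inj_on_def)
    thus "Mt 0 $$ (i, j) = 1\<^sub>m n $$ (i, j)" using ij by (simp add: Mt_def M_def E0 enP)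
  qed (auto simp: Mt_def M_def)
  have "poly (det M) 0 = 1" using detMt[of 0] M0 by simp
  hence D0: "det M \<noteq> 0" by auto
  define S where "S = {t. poly (det M) t = 0}"
  have fS: "finite S" unfolding S_def using D0 poly_roots_finite by blast
  have sumP: "(\<Sum>p'\<in>P. f p') = (\<Sum>j<n. f (en j))" for f :: "'p \<Rightarrow> 'k"
    using sum.reindex_bij_betw[OF en, of f] n_def by simp
  have Mtv: "(Mt t *\<^sub>v vec n (\<lambda>j. z (en j))) $ i = (\<Sum>p'\<in>P. poly (EP (en i) p') t * z p')" if "i < n" for t z i
    using that by (simp add: sumP Mt_def M_def mult_mat_vec_def scalar_prod_def lessThan_atLeast0)
  have "\<forall>t. t \<notin> S \<longrightarrow>
     (\<forall>z. (\<forall>p\<in>P. (\<Sum>p'\<in>P. poly (EP p p') t * z p') = 0) \<longrightarrow> (\<forall>p\<in>P. z p = 0)) \<and>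
     (\<forall>y. \<exists>z. \<forall>p\<in>P. (\<Sum>p'\<in>P. poly (EP p p') t * z p') = y p)"
  proof (intro allI impI conjI)
    fix t assume "t \<notin> S"
    hence dt: "det (Mt t) \<noteq> 0" unfolding S_def detMt by auto
    {
      fix z assume z: "\<forall>p\<in>P. (\<Sum>p'\<in>P. poly (EP p p') t * z p') = 0"
      have "Mt t *\<^sub>v vec n (\<lambda>j. z (en j)) = 0\<^sub>v n"
      proof (rule eq_vecI)
        fix i assume "i < dim_vec (0\<^sub>v n :: 'k vec)"
        hence i: "i < n" by simp
        show "(Mt t *\<^sub>v vec n (\<lambda>j. z (en j))) $ i = 0\<^sub>v n $ i"
          unfolding Mtv[OF i] using z enP[OF i] i by simp
      qed (use Mtc[of t] in simp)
      hence "vec n (\<lambda>j. z (en j)) = 0\<^sub>v n" using det_0_iff_vec_prod_zero_field[OF Mtc[of t]] dt by (meson vec_carrier)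
      hence "\<forall>j<n. z (en j) = 0" by (metis index_vec index_zero_vec(1))
      thus "\<forall>p\<in>P. z p = 0" using en unfolding bij_betw_def n_def by (metis imageE lessThan_iff)
    }
    {
      fix y :: "'p \<Rightarrow> 'k"
      from det_non_zero_imp_unit[OF Mtc dt, of "()"]
      obtain B where B: "B \<in> carrier_mat n n" "Mt t * B = 1\<^sub>m n"
        unfolding Units_def ring_mat_def by auto
      define w where "w = B *\<^sub>v vec n (\<lambda>j. y (en j))"
      have w: "Mt t *\<^sub>v w = vec n (\<lambda>j. y (en j))"
      proof -
        have "Mt t *\<^sub>v w = (Mt t * B) *\<^sub>v vec n (\<lambda>j. y (en j))"
          unfolding w_def by (rule assoc_mult_mat_vec[symmetric, OF Mtc B(1)]) simp
        also have "\<dots> = vec n (\<lambda>j. y (en j))" unfolding B(2) by simp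
        finally show ?thesis .
      qed
      define ix where "ix = inv_into {..<n} en"
      have ix: "\<And>p. p \<in> P \<Longrightarrow> ix p < n \<and> en (ix p) = p"
      proof -
        fix p assume p: "p \<in> P"
        have en': "bij_betw en {..<n} P" using en n_def by simp
        show "ix p < n \<and> en (ix p) = p" unfolding ix_def
          using bij_betw_inv_into_right[OF en' p] inv_into_into[of p en "{..<n}"] en' p
          unfolding bij_betw_def by auto
      qed
      define z where "z p = w $ ix p" for p
      have wz: "w = vec n (\<lambda>j. z (en j))"
      proof (rule eq_vecI)
        show "dim_vec w = dim_vec (vec n (\<lambda>j. z (en j)))" using B unfolding w_def by simp
        fix j assume "j < dim_vec (vec n (\<lambda>j. z (en j)))"
        hence j: "j < n" by simp
        have "ix (en j) = j" using ix[OF enP[OF j]] inj j by (auto simp: inj_on_def)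
        thus "w $ j = vec n (\<lambda>j. z (en j)) $ j" using j by (simp add: z_def)
      qed
      show "\<exists>z. \<forall>p\<in>P. (\<Sum>p'\<in>P. poly (EP p p') t * z p') = y p"
      proof (intro exI ballI)
        fix p assume p: "p \<in> P"
        have "(Mt t *\<^sub>v w) $ ix p = y p" using w ix[OF p] by simp
        thus "(\<Sum>p'\<in>P. poly (EP p p') t * z p') = y p" using Mtv[of "ix p" t z] ix[OF p] wz by simp
      qed
    }
  qed
  thus ?thesis using fS by blast
qed

lemma matsurj:
  fixes N :: "'q \<Rightarrow> 'p \<Rightarrow> 'k::field poly"
  assumes P: "finite P" and Q: "finite Q"
    and N0: "\<forall>y. \<exists>z. \<forall>q\<in>Q. (\<Sum>p\<in>P. poly (N q p) 0 * z p) = y q"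
  shows "\<exists>S. finite S \<and> (\<forall>t. t \<notin> S \<longrightarrow> (\<forall>y. \<exists>z. \<forall>q\<in>Q. (\<Sum>p\<in>P. poly (N q p) t * z p) = y q))"
proof -
  define H where "H p q' = (SOME z. \<forall>q\<in>Q. (\<Sum>p\<in>P. poly (N q p) 0 * z p) = (if q = q' then 1 else 0)) p" for p q'
  have H: "\<forall>q\<in>Q. (\<Sum>p\<in>P. poly (N q p) 0 * H p q') = (if q = q' then 1 else 0)" for q'
    unfolding H_def using someI_ex[OF N0[rule_format, of "\<lambda>q. if q = q' then 1 else 0"]] by simp
  define EP where "EP q q' = (\<Sum>p\<in>P. smult (H p q') (N q p))" for q q'
  have EPt: "poly (EP q q') t = (\<Sum>p\<in>P. poly (N q p) t * H p q')" for q q' t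
    unfolding EP_def poly_sum poly_smult by (rule sum.cong) (simp_all add: mult.commute)
  have E0: "poly (EP p p') 0 = (if p = p' then 1 else 0)" if "p \<in> Q" "p' \<in> Q" for p p'
    unfolding EPt using H[of p'] that by simp
  from detsq[OF Q, of EP, OF E0] obtain S where
    SS: "finite S \<and> (\<forall>t. t \<notin> S \<longrightarrow> (\<forall>z. (\<forall>p\<in>Q. (\<Sum>p'\<in>Q. poly (EP p p') t * z p') = 0) \<longrightarrow> (\<forall>p\<in>Q. z p = 0)) \<and>
     (\<forall>y. \<exists>z. \<forall>p\<in>Q. (\<Sum>p'\<in>Q. poly (EP p p') t * z p') = y p))" ..
  have S: "finite S" using SS by (rule conjunct1)
  have St: "\<forall>t. t \<notin> S \<longrightarrow> (\<forall>y. \<exists>z. \<forall>q\<in>Q. (\<Sum>q'\<in>Q. poly (EP q q') t * z q') = y q)"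
    using SS by simp
  have "\<forall>t. t \<notin> S \<longrightarrow> (\<forall>y. \<exists>z. \<forall>q\<in>Q. (\<Sum>p\<in>P. poly (N q p) t * z p) = y q)"
  proof (intro allI impI)
    fix t y assume t: "t \<notin> S"
    obtain w where w: "\<forall>q\<in>Q. (\<Sum>q'\<in>Q. poly (EP q q') t * w q') = y q" using St t by blast
    show "\<exists>z. \<forall>q\<in>Q. (\<Sum>p\<in>P. poly (N q p) t * z p) = y q"
    proof (intro exI ballI)
      fix q assume q: "q \<in> Q"
      have "(\<Sum>p\<in>P. poly (N q p) t * (\<Sum>q'\<in>Q. H p q' * w q')) = (\<Sum>q'\<in>Q. poly (EP q q') t * w q')"
        unfolding EPt sum_distrib_left sum_distrib_right mult.assoc by (rule sum.swap)
      thus "(\<Sum>p\<in>P. poly (N q p) t * (\<Sum>q'\<in>Q. H p q' * w q')) = y q" using w q by simp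
    qed
  qed
  thus ?thesis using S by blast
qed

lemma sum_fun_app: "(\<Sum>q\<in>F. f q) x = (\<Sum>q\<in>F. f q x)"
  by (induction F rule: infinite_finite_induct) (auto simp: zero_fun_def plus_fun_def)

definition fsc :: "'k::field \<Rightarrow> ('q \<Rightarrow> 'k) \<Rightarrow> ('q \<Rightarrow> 'k)" where
  "fsc c f = (\<lambda>x. c * f x)"

lemma vs_fsc: "vector_space (fsc :: 'k::field \<Rightarrow> ('q \<Rightarrow> 'k) \<Rightarrow> ('q \<Rightarrow> 'k))"
  by unfold_locales (auto simp: fsc_def fun_eq_iff algebra_simps)

lemma matinj:
  fixes N :: "'q \<Rightarrow> 'p \<Rightarrow> 'k::field poly"
  assumes P: "finite P" and Q: "finite Q"
    and N0: "\<forall>z. (\<forall>q\<in>Q. (\<Sum>p\<in>P. poly (N q p) 0 * z p) = 0) \<longrightarrow> (\<forall>p\<in>P. z p = 0)"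
  shows "\<exists>S. finite S \<and> (\<forall>t. t \<notin> S \<longrightarrow> (\<forall>z. (\<forall>q\<in>Q. (\<Sum>p\<in>P. poly (N q p) t * z p) = 0) \<longrightarrow> (\<forall>p\<in>P. z p = 0)))"
proof -
  define T :: "('p \<Rightarrow> 'k) \<Rightarrow> ('q \<Rightarrow> 'k)" where
    "T z = (\<lambda>q. if q \<in> Q then (\<Sum>p\<in>P. poly (N q p) 0 * z p) else 0)" for z
  define U where "U = {z :: 'p \<Rightarrow> 'k. \<forall>p. p \<notin> P \<longrightarrow> z p = 0}"
  interpret vp: vector_space_pair "fsc :: 'k \<Rightarrow> ('p \<Rightarrow> 'k) \<Rightarrow> _" "fsc :: 'k \<Rightarrow> ('q \<Rightarrow> 'k) \<Rightarrow> _"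
    unfolding vector_space_pair_def by (simp add: vs_fsc)
  have linT: "Vector_Spaces.linear fsc fsc T"
    unfolding Vector_Spaces.linear_iff
    by (auto simp: vs_fsc T_def fsc_def fun_eq_iff sum.distrib sum_distrib_left algebra_simps)
  have subU: "vp.vs1.subspace U"
    unfolding vp.vs1.subspace_def U_def by (auto simp: fsc_def)
  have injT: "inj_on T U"
  proof (rule inj_onI)
    fix z z' assume z: "z \<in> U" "z' \<in> U" and e: "T z = T z'"
    have "\<forall>q\<in>Q. (\<Sum>p\<in>P. poly (N q p) 0 * (z p - z' p)) = 0"
    proof
      fix q assume q: "q \<in> Q"
      have "(\<Sum>p\<in>P. poly (N q p) 0 * z p) = (\<Sum>p\<in>P. poly (N q p) 0 * z' p)"
        using fun_cong[OF e, of q] q by (simp add: T_def)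
      thus "(\<Sum>p\<in>P. poly (N q p) 0 * (z p - z' p)) = 0"
        by (simp add: right_diff_distrib sum_subtractf)
    qed
    hence "\<forall>p\<in>P. z p - z' p = 0" using N0[rule_format, of "\<lambda>p. z p - z' p"] by blast
    thus "z = z'" using z unfolding U_def by (auto simp: fun_eq_iff)
  qed
  obtain g where g: "Vector_Spaces.linear fsc fsc g" "\<forall>v\<in>U. g (T v) = v"
    using vp.linear_exists_left_inverse_on[OF linT subU injT] by blast
  have gadd: "g (x + y) = g x + g y" "g (fsc c x) = fsc c (g x)" for x y c
    using g(1) unfolding Vector_Spaces.linear_iff by auto
  have gsum: "g (\<Sum>q\<in>F. fsc (c q) (f q)) = (\<Sum>q\<in>F. fsc (c q) (g (f q)))" if "finite F" for F c f
    using that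
  proof (induction F rule: finite_induct)
    case empty
    have "g 0 = g (fsc 0 0)" by (simp add: fsc_def zero_fun_def)
    also have "\<dots> = 0" by (simp only: gadd) (simp add: fsc_def zero_fun_def)
    finally show ?case by (simp only: sum.empty)
  next
    case (insert x F)
    show ?case by (simp only: sum.insert[OF insert.hyps(1,2)] gadd insert.IH)
  qed
  define del where "del q = (\<lambda>q'::'q. if q' = q then (1::'k) else 0)" for q
  define G where "G p q = g (del q) p" for p q
  have G: "(\<Sum>q\<in>Q. G p q * poly (N q p') 0) = (if p = p' then 1 else 0)" if "p \<in> P" "p' \<in> P" for p p'
  proof -
    have Tdel: "T (\<lambda>x. if x = p' then 1 else 0) = (\<Sum>q\<in>Q. fsc (poly (N q p') 0) (del q))"
    proof (rule ext)
      fix x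
      have "(\<Sum>q\<in>Q. fsc (poly (N q p') 0) (del q)) x = (\<Sum>q\<in>Q. (if x = q then poly (N q p') 0 else 0))"
        by (simp add: sum_fun_app fsc_def del_def if_distrib[of "\<lambda>u. _ * u"] cong: if_cong)
      also have "\<dots> = (if x \<in> Q then poly (N x p') 0 else 0)" by (rule sum.delta'[OF Q])
      also have "\<dots> = T (\<lambda>x. if x = p' then 1 else 0) x"
        by (simp add: T_def that P if_distrib[of "\<lambda>u. _ * u"] sum.delta'[OF P] cong: if_cong)
      finally show "T (\<lambda>x. if x = p' then 1 else 0) x = (\<Sum>q\<in>Q. fsc (poly (N q p') 0) (del q)) x" by simp
    qed
    hence "g (\<Sum>q\<in>Q. fsc (poly (N q p') 0) (del q)) = (\<lambda>x. if x = p' then 1 else 0)"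
    proof -
      have "(\<lambda>x. if x = p' then (1::'k) else 0) \<in> U" using that by (simp add: U_def)
      from g(2)[rule_format, OF this] show ?thesis by (simp only: Tdel)
    qed
    hence "(\<Sum>q\<in>Q. fsc (poly (N q p') 0) (g (del q))) p = (if p = p' then 1 else 0)"
      using gsum[OF Q] by (simp add: sum_fun_app)
    thus ?thesis by (simp add: fsc_def G_def mult.commute sum_fun_app)
  qed
  define EP where "EP p p' = (\<Sum>q\<in>Q. smult (G p q) (N q p'))" for p p'
  have EPt: "poly (EP p p') t = (\<Sum>q\<in>Q. G p q * poly (N q p') t)" for p p' t
    unfolding EP_def by (simp add: poly_sum)
  have E0: "poly (EP p p') 0 = (if p = p' then 1 else 0)" if "p \<in> P" "p' \<in> P" for p p'
    unfolding EPt using G[OF that] .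
  from detsq[OF P, of EP, OF E0] obtain S where
    SS: "finite S \<and> (\<forall>t. t \<notin> S \<longrightarrow> (\<forall>z. (\<forall>p\<in>P. (\<Sum>p'\<in>P. poly (EP p p') t * z p') = 0) \<longrightarrow> (\<forall>p\<in>P. z p = 0)) \<and>
     (\<forall>y. \<exists>z. \<forall>p\<in>P. (\<Sum>p'\<in>P. poly (EP p p') t * z p') = y p))" ..
  have S: "finite S" using SS by (rule conjunct1)
  have St: "\<forall>t. t \<notin> S \<longrightarrow> (\<forall>z. (\<forall>p\<in>P. (\<Sum>p'\<in>P. poly (EP p p') t * z p') = 0) \<longrightarrow> (\<forall>p\<in>P. z p = 0))"
    using SS by simp
  have "\<forall>t. t \<notin> S \<longrightarrow> (\<forall>z. (\<forall>q\<in>Q. (\<Sum>p\<in>P. poly (N q p) t * z p) = 0) \<longrightarrow> (\<forall>p\<in>P. z p = 0))"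
  proof (intro allI impI)
    fix t z assume t: "t \<notin> S" and z: "\<forall>q\<in>Q. (\<Sum>p\<in>P. poly (N q p) t * z p) = 0"
    have "\<forall>p\<in>P. (\<Sum>p'\<in>P. poly (EP p p') t * z p') = 0"
    proof
      fix p assume "p \<in> P"
      have "(\<Sum>p'\<in>P. poly (EP p p') t * z p') = (\<Sum>q\<in>Q. G p q * (\<Sum>p'\<in>P. poly (N q p') t * z p'))"
        unfolding EPt sum_distrib_left sum_distrib_right mult.assoc by (rule sum.swap)
      thus "(\<Sum>p'\<in>P. poly (EP p p') t * z p') = 0" using z by simp
    qed
    thus "\<forall>p\<in>P. z p = 0" using St t by blast
  qed
  thus ?thesis using S by blast
qed



locale sga =
  fixes S :: "'k::field_char_0 \<Rightarrow> 'a::comm_ring_1 \<Rightarrow> 'a" and A :: "nat \<Rightarrow> 'a set"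
  assumes sga: "standard_graded_artinian_algebra S A"
begin

lemma vs: "vector_space S"
  using sga unfolding standard_graded_artinian_algebra_def standard_graded_algebra_def k_algebra_def by blast

sublocale vs: vector_space S by (rule vs)

lemma kalg: "S c (x * y) = S c x * y"
  using sga unfolding standard_graded_artinian_algebra_def standard_graded_algebra_def k_algebra_def by blast

lemma kalg2: "S c (x * y) = x * S c y"
  by (metis kalg mult.commute)

lemma sub: "vs.subspace (A i)"
  using sga unfolding standard_graded_artinian_algebra_def standard_graded_algebra_def by blast

lemma mulA: "x \<in> A i \<Longrightarrow> y \<in> A j \<Longrightarrow> x * y \<in> A (i + j)"
  using sga unfolding standard_graded_artinian_algebra_def standard_graded_algebra_def by blast

lemma A0: "A 0 = range (\<lambda>c. S c 1)"
  using sga unfolding standard_graded_artinian_algebra_def standard_graded_algebra_def by blast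

lemma one_A0: "1 \<in> A 0"
  unfolding A0 by (rule range_eqI[of _ _ 1]) simp

lemma A1fin: "\<exists>B. finite B \<and> vs.span B = A 1"
  using sga unfolding standard_graded_artinian_algebra_def standard_graded_algebra_def by blast

lemma gen: "A (Suc i) = vs.span {x * y | x y. x \<in> A 1 \<and> y \<in> A i}"
  using sga unfolding standard_graded_artinian_algebra_def standard_graded_algebra_def by blast

lemma art: "artinian_ring TYPE('a)"
  using sga unfolding standard_graded_artinian_algebra_def by blast

lemma dec_ex1: "\<exists>!c :: nat \<Rightarrow> 'a. (\<forall>i. c i \<in> A i) \<and> finite {i. c i \<noteq> 0} \<and> x = (\<Sum>i\<in>{i. c i \<noteq> 0}. c i)"
  using sga unfolding standard_graded_artinian_algebra_def standard_graded_algebra_def by blast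

lemma zeroA: "0 \<in> A i" using vs.subspace_0[OF sub] .
lemma addA: "x \<in> A i \<Longrightarrow> y \<in> A i \<Longrightarrow> x + y \<in> A i" using vs.subspace_add[OF sub] .
lemma diffA: "x \<in> A i \<Longrightarrow> y \<in> A i \<Longrightarrow> x - y \<in> A i" using vs.subspace_diff[OF sub] .
lemma scaleA: "x \<in> A i \<Longrightarrow> S c x \<in> A i" using vs.subspace_scale[OF sub] .
lemma sumA: "(\<And>x. x \<in> B \<Longrightarrow> f x \<in> A i) \<Longrightarrow> sum f B \<in> A i" using vs.subspace_sum[OF sub] .

definition hasdec :: "'a \<Rightarrow> nat set \<Rightarrow> (nat \<Rightarrow> 'a) \<Rightarrow> bool" where
  "hasdec x G c \<longleftrightarrow> finite G \<and> (\<forall>i. c i \<in> A i) \<and> (\<forall>i. i \<notin> G \<longrightarrow> c i = 0) \<and> x = (\<Sum>i\<in>G. c i)"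

lemma hasdec_unique:
  assumes "hasdec x G c" "hasdec x G' c'" shows "c = c'"
proof -
  have *: "(\<forall>i. d i \<in> A i) \<and> finite {i. d i \<noteq> 0} \<and> x = (\<Sum>i\<in>{i. d i \<noteq> 0}. d i)"
    if "hasdec x H d" for H d
  proof -
    have fin: "finite H" and sub: "{i. d i \<noteq> 0} \<subseteq> H" using that unfolding hasdec_def by auto
    have "x = (\<Sum>i\<in>H. d i)" using that unfolding hasdec_def by auto
    also have "\<dots> = (\<Sum>i\<in>{i. d i \<noteq> 0}. d i)"
      by (rule sum.mono_neutral_right[OF fin sub]) auto
    finally show ?thesis using that fin sub finite_subset unfolding hasdec_def by blast
  qed
  show ?thesis using dec_ex1[of x] *[OF assms(1)] *[OF assms(2)] by blast
qed

lemma span_hasdec: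
  assumes "x \<in> vs.span (\<Union>d\<in>D. A d)"
  shows "\<exists>G c. G \<subseteq> D \<and> hasdec x G c"
  using assms
proof (induction rule: vs.span_induct)
  case (step x)
  then obtain d where d: "d \<in> D" "x \<in> A d" by auto
  have "hasdec x {d} (\<lambda>i. if i = d then x else 0)"
    unfolding hasdec_def using d zeroA by auto
  thus ?case using d by blast
next
  case base
  show ?case
  proof (rule vs.subspaceI)
    show "0 \<in> Collect (\<lambda>x. \<exists>G c. G \<subseteq> D \<and> hasdec x G c)"
      using zeroA by (auto simp: hasdec_def intro!: exI[of _ "{}"] exI[of _ "\<lambda>_. 0"])
  next
    fix x y assume "x \<in> Collect (\<lambda>x. \<exists>G c. G \<subseteq> D \<and> hasdec x G c)" "y \<in> Collect (\<lambda>x. \<exists>G c. G \<subseteq> D \<and> hasdec x G c)"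
    then obtain G c G' c' where h: "G \<subseteq> D" "hasdec x G c" "G' \<subseteq> D" "hasdec y G' c'" by auto
    have "hasdec (x + y) (G \<union> G') (\<lambda>i. c i + c' i)"
    proof -
      have f: "finite G" "finite G'" using h unfolding hasdec_def by auto
      have "x = (\<Sum>i\<in>G \<union> G'. c i)"
        using h(2) unfolding hasdec_def by (auto intro!: sum.mono_neutral_left f)
      moreover have "y = (\<Sum>i\<in>G \<union> G'. c' i)"
        using h(4) unfolding hasdec_def by (auto intro!: sum.mono_neutral_left f)
      ultimately show ?thesis using h f addA unfolding hasdec_def by (auto simp: sum.distrib)
    qed
    thus "x + y \<in> Collect (\<lambda>x. \<exists>G c. G \<subseteq> D \<and> hasdec x G c)" using h by blast
  next
    fix a x assume "x \<in> Collect (\<lambda>x. \<exists>G c. G \<subseteq> D \<and> hasdec x G c)"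
    then obtain G c where h: "G \<subseteq> D" "hasdec x G c" by auto
    have "hasdec (S a x) G (\<lambda>i. S a (c i))"
      using h scaleA unfolding hasdec_def by (auto simp: vs.scale_sum_right)
    thus "S a x \<in> Collect (\<lambda>x. \<exists>G c. G \<subseteq> D \<and> hasdec x G c)" using h by blast
  qed
qed

lemma mul_span:
  assumes c: "c \<in> A i" and x: "x \<in> vs.span (\<Union>d\<in>{n..}. A d)"
  shows "c * x \<in> vs.span (\<Union>d\<in>{n..}. A d)"
  using x
proof (induction rule: vs.span_induct)
  case (step x)
  then obtain d where "d \<ge> n" "x \<in> A d" by auto
  hence "c * x \<in> A (i + d)" "i + d \<in> {n..}" using mulA[OF c] by auto
  thus ?case by (meson UN_I vs.span_base)
next
  case base
  show ?case
    by (rule vs.subspaceI) (auto simp: vs.span_zero vs.span_add distrib_left kalg2[symmetric] vs.span_scale)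
qed

lemma vanish: "\<exists>N. \<forall>n\<ge>N. A n = {0}"
proof -
  define I where "I n = vs.span (\<Union>d\<in>{n..}. A d)" for n
  have ideal: "ring_ideal (I n)" for n
    unfolding ring_ideal_def
  proof (intro conjI ballI allI)
    show "0 \<in> I n" unfolding I_def by (rule vs.span_zero)
    show "x + y \<in> I n" if "x \<in> I n" "y \<in> I n" for x y using that unfolding I_def by (rule vs.span_add)
    fix x r assume x: "x \<in> I n"
    obtain c where c: "\<forall>i. c i \<in> A i" "r = (\<Sum>i\<in>{i. c i \<noteq> 0}. c i)" using dec_ex1[of r] by blast
    have "r * x = (\<Sum>i\<in>{i. c i \<noteq> 0}. c i * x)" unfolding c(2) by (simp add: sum_distrib_right)
    also have "\<dots> \<in> I n" unfolding I_def
      by (rule vs.span_sum) (rule mul_span[OF c(1)[rule_format] x[unfolded I_def]])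
    finally show "r * x \<in> I n" .
  qed
  have mono: "I (Suc n) \<subseteq> I n" for n
    unfolding I_def by (rule vs.span_mono) (auto intro: Suc_leD)
  have "\<not> (\<forall>n. ring_ideal (I n) \<and> I (Suc n) \<subset> I n)"
    using art unfolding artinian_ring_def by blast
  then obtain n where eq: "I (Suc n) = I n" using ideal mono by blast
  have An: "A n = {0}"
  proof -
    have "x = 0" if x: "x \<in> A n" for x
    proof -
      have "x \<in> I n" unfolding I_def using x by (auto intro: vs.span_base)
      hence "x \<in> I (Suc n)" using eq by simp
      then obtain G c where G: "G \<subseteq> {Suc n..}" "hasdec x G c" using span_hasdec unfolding I_def by blast
      have "hasdec x {n} (\<lambda>i. if i = n then x else 0)" unfolding hasdec_def using x zeroA by auto
      from fun_cong[OF hasdec_unique[OF this G(2)], of n] have "x = c n" by simp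
      moreover have "c n = 0" using G unfolding hasdec_def by auto
      ultimately show ?thesis by simp
    qed
    thus ?thesis using zeroA by blast
  qed
  have "A m = {0}" if "m \<ge> n" for m
    using that
  proof (induction m rule: dec_induct)
    case base thus ?case by (rule An)
  next
    case (step m)
    have "{x * y | x y. x \<in> A 1 \<and> y \<in> A m} \<subseteq> {0}" using step.IH by auto
    hence "A (Suc m) \<subseteq> vs.span {0}" unfolding gen by (rule vs.span_mono)
    thus ?case using zeroA by auto
  qed
  thus ?thesis by blast
qed

lemma span_mult:
  assumes x: "x \<in> vs.span B1" and y: "y \<in> vs.span B2"
  shows "x * y \<in> vs.span {b * b' | b b'. b \<in> B1 \<and> b' \<in> B2}"
proof -
  let ?T = "{b * b' | b b'. b \<in> B1 \<and> b' \<in> B2}"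
  have 1: "x * b' \<in> vs.span ?T" if b': "b' \<in> B2" for b'
    using x
  proof (induction rule: vs.span_induct)
    case (step x) thus ?case using b' by (blast intro: vs.span_base)
  next
    case base show ?case
      by (rule vs.subspaceI) (auto simp: vs.span_zero vs.span_add distrib_right kalg[symmetric] vs.span_scale)
  qed
  show ?thesis using y
  proof (induction rule: vs.span_induct)
    case (step y) thus ?case using 1 by blast
  next
    case base show ?case
      by (rule vs.subspaceI) (auto simp: vs.span_zero vs.span_add distrib_left kalg2[symmetric] vs.span_scale)
  qed
qed

lemma findim: "\<exists>B. finite B \<and> A i = vs.span B"
proof (induction i)
  case 0
  have "A 0 = vs.span {1}" unfolding A0 vs.span_singleton by simp
  thus ?case by blast
next
  case (Suc i)
  obtain B1 where B1: "finite B1" "vs.span B1 = A 1" using A1fin by blast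
  obtain B2 where B2: "finite B2" "A i = vs.span B2" using Suc.IH by blast
  let ?T = "{b * b' | b b'. b \<in> B1 \<and> b' \<in> B2}"
  have fT: "finite ?T"
  proof -
    have "?T = (\<lambda>(b, b'). b * b') ` (B1 \<times> B2)" by auto
    thus ?thesis using B1 B2 by simp
  qed
  have "A (Suc i) \<subseteq> vs.span ?T"
    unfolding gen using span_mult B1 B2 by (intro vs.span_minimal) (auto simp: vs.subspace_span)
  moreover have "?T \<subseteq> A (Suc i)"
  proof
    fix z assume "z \<in> ?T"
    then obtain b b' where "z = b * b'" "b \<in> B1" "b' \<in> B2" by auto
    thus "z \<in> A (Suc i)" using mulA[of b 1 b' i] B1 B2 vs.span_base by (metis add.commute plus_1_eq_Suc)
  qed
  hence "vs.span ?T \<subseteq> A (Suc i)" using sub by (intro vs.span_minimal)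
  ultimately show ?case using fT by blast
qed

end



lemma pideal_0[simp]: "0 \<in> pideal c" unfolding pideal_def by (rule range_eqI[of _ _ 0]) simp
lemma pideal_add: "x \<in> pideal c \<Longrightarrow> y \<in> pideal c \<Longrightarrow> x + y \<in> pideal c"
  unfolding pideal_def by (auto simp: distrib_left[symmetric])
lemma pideal_neg: "x \<in> pideal c \<Longrightarrow> - x \<in> pideal c"
  unfolding pideal_def by (auto intro: range_eqI[of _ _ "- _"])
lemma pideal_diff: "x \<in> pideal c \<Longrightarrow> y \<in> pideal c \<Longrightarrow> x - y \<in> pideal c"
  using pideal_add[of x c "- y"] pideal_neg by auto
lemma pideal_multl: "x \<in> pideal c \<Longrightarrow> r * x \<in> pideal c"
  unfolding pideal_def by (auto simp: mult.left_commute intro: range_eqI)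
lemma pideal_multr: "x \<in> pideal c \<Longrightarrow> x * r \<in> pideal c"
  using pideal_multl[of x c r] by (simp add: mult.commute)
lemma pideal_sum: "(\<And>i. i \<in> I \<Longrightarrow> f i \<in> pideal c) \<Longrightarrow> sum f I \<in> pideal c"
  by (induction I rule: infinite_finite_induct) (auto intro: pideal_add)
lemma pideal_pow_mult:
  assumes "x \<in> pideal (l ^ a)" "y \<in> pideal (l ^ b)" shows "x * y \<in> pideal (l ^ (a + b))"
proof -
  obtain u v where "x = l ^ a * u" "y = l ^ b * v" using assms unfolding pideal_def by auto
  hence "x * y = l ^ (a + b) * (u * v)" by (simp add: power_add ac_simps)
  thus ?thesis unfolding pideal_def by auto
qed
lemma pideal_pow_mono: "a \<le> b \<Longrightarrow> pideal (l ^ b) \<subseteq> pideal (l ^ a)"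
proof
  fix x assume "a \<le> b" "x \<in> pideal (l ^ b)"
  then obtain y where "x = l ^ b * y" unfolding pideal_def by auto
  hence "x = l ^ a * (l ^ (b - a) * y)" using \<open>a \<le> b\<close> by (simp add: power_add[symmetric] mult.assoc[symmetric])
  thus "x \<in> pideal (l ^ a)" unfolding pideal_def by auto
qed
lemma pideal_1[simp]: "pideal 1 = UNIV" unfolding pideal_def by auto
lemma pideal_zero[simp]: "pideal 0 = {0}" unfolding pideal_def by auto
lemma pideal_self: "c \<in> pideal c" unfolding pideal_def by (rule range_eqI[of _ _ 1]) simp

lemma coset_eq: "coset (pideal c) x = coset (pideal c) y \<longleftrightarrow> x - y \<in> pideal c"
proof
  assume "coset (pideal c) x = coset (pideal c) y"
  moreover have "x \<in> coset (pideal c) x" unfolding coset_def by (rule image_eqI[of _ _ 0]) auto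
  ultimately obtain z where "z \<in> pideal c" "x = y + z" unfolding coset_def by auto
  thus "x - y \<in> pideal c" by simp
next
  assume h: "x - y \<in> pideal c"
  show "coset (pideal c) x = coset (pideal c) y"
  proof (unfold coset_def, intro equalityI subsetI)
    fix w assume "w \<in> (+) x ` pideal c"
    then obtain z where z: "z \<in> pideal c" "w = x + z" by auto
    hence "w = y + ((x - y) + z)" by simp
    thus "w \<in> (+) y ` pideal c" using pideal_add[OF h z(1)] by blast
  next
    fix w assume "w \<in> (+) y ` pideal c"
    then obtain z where z: "z \<in> pideal c" "w = y + z" by auto
    hence "w = x + (z - (x - y))" by simp
    thus "w \<in> (+) x ` pideal c" using pideal_diff[OF z(1) h] by blast
  qed
qed

lemma gr_rep_coset: "gr_rep (coset (pideal c) x) - x \<in> pideal c"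
proof -
  have "x \<in> coset (pideal c) x" unfolding coset_def by (rule image_eqI[of _ _ 0]) auto
  hence "gr_rep (coset (pideal c) x) \<in> coset (pideal c) x" unfolding gr_rep_def by (rule someI)
  then obtain z where "z \<in> pideal c" "gr_rep (coset (pideal c) x) = x + z" unfolding coset_def by auto
  thus ?thesis by simp
qed

context sga
begin

lemma pideal_scale: "x \<in> pideal c \<Longrightarrow> S a x \<in> pideal c"
  unfolding pideal_def by (auto simp: kalg2 intro: range_eqI)

lemma pideal_subspace: "vs.subspace (pideal c)"
  by (rule vs.subspaceI) (auto intro: pideal_add pideal_scale)

lemma adapted:
  assumes B0: "finite B0" "F 0 \<subseteq> vs.span B0"
    and Fs: "\<And>j. vs.subspace (F j)" and Fd: "\<And>j. F (Suc j) \<subseteq> F j"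
    and FR: "\<And>j. j \<ge> R \<Longrightarrow> F j = {0}"
  shows "\<exists>B. finite B \<and> vs.independent B \<and> B \<subseteq> F 0 \<and> F 0 \<subseteq> vs.span B \<and> (\<forall>j. F j \<subseteq> vs.span (B \<inter> F j))"
proof -
  have Fmono: "F b \<subseteq> F a" if "a \<le> b" for a b
    using that by (induction b rule: dec_induct) (use Fd in auto)
  have "\<exists>B. vs.independent B \<and> B \<subseteq> F (R - K) \<and> (\<forall>j\<ge>R - K. F j \<subseteq> vs.span (B \<inter> F j))" if "K \<le> R" for K
    using that
  proof (induction K)
    case 0
    show ?case by (rule exI[of _ "{}"]) (auto simp: FR vs.span_zero vs.independent_empty)
  next
    case (Suc K)
    define m where "m = R - Suc K"
    have m: "R - K = Suc m" using Suc.prems unfolding m_def by simp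
    obtain B where B: "vs.independent B" "B \<subseteq> F (Suc m)" "\<forall>j\<ge>Suc m. F j \<subseteq> vs.span (B \<inter> F j)"
      using Suc.IH Suc.prems m by auto
    have "B \<subseteq> F m" using B(2) Fd by blast
    then obtain B' where B': "B \<subseteq> B'" "B' \<subseteq> F m" "vs.independent B'" "F m \<subseteq> vs.span B'"
      using vs.maximal_independent_subset_extend[OF _ B(1)] by metis
    have "\<forall>j\<ge>m. F j \<subseteq> vs.span (B' \<inter> F j)"
    proof (intro allI impI)
      fix j assume "m \<le> j"
      show "F j \<subseteq> vs.span (B' \<inter> F j)"
      proof (cases "j = m")
        case True thus ?thesis using B' by (simp add: Int_absorb2)
      next
        case False
        hence "F j \<subseteq> vs.span (B \<inter> F j)" using B(3) \<open>m \<le> j\<close> by auto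
        also have "\<dots> \<subseteq> vs.span (B' \<inter> F j)" by (rule vs.span_mono) (use B' in auto)
        finally show ?thesis .
      qed
    qed
    thus ?case using B' unfolding m_def by blast
  qed
  from this[of R] obtain B where B: "vs.independent B" "B \<subseteq> F 0" "\<forall>j. F j \<subseteq> vs.span (B \<inter> F j)"
    by auto
  have "finite B" using vs.independent_span_bound[OF B0(1) B(1)] B(2) B0(2) by blast
  moreover have "F 0 \<subseteq> vs.span B" using B(3)[rule_format, of 0] vs.span_mono[of "B \<inter> F 0" B] by blast
  ultimately show ?thesis using B by blast
qed

lemma pow_A: "l \<in> A 1 \<Longrightarrow> l ^ n \<in> A n"
proof (induction n)
  case 0 thus ?case using one_A0 by simp
next
  case (Suc n) thus ?case using mulA[of l 1 "l ^ n" n] by simp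
qed

end

locale grl = sga S A for S :: "'k::field_char_0 \<Rightarrow> 'a::comm_ring_1 \<Rightarrow> 'a" and A +
  fixes l L
  assumes l1: "l \<in> A 1" and LG: "L \<in> gr_grade A l 1"
begin

definition R where "R = (LEAST R. l ^ R = 0)"

lemma lR: "l ^ R = 0"
proof -
  obtain N where N: "\<forall>n\<ge>N. A n = {0}" using vanish by blast
  have "l ^ N = 0" using pow_A[OF l1, of N] N by auto
  thus ?thesis unfolding R_def by (rule LeastI)
qed

lemma pideal_big: "e \<ge> R \<Longrightarrow> pideal (l ^ e) = {0}"
proof -
  assume "e \<ge> R"
  hence "l ^ e = l ^ R * l ^ (e - R)" by (simp add: power_add[symmetric])
  thus ?thesis using lR by simp
qed

definition xL where "xL e = (SOME x. x \<in> pideal (l ^ e) \<and> x \<in> A 1 \<and> L e = coset (pideal (l ^ Suc e)) x)"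

lemma xL: "xL e \<in> pideal (l ^ e)" "xL e \<in> A 1" "L e = coset (pideal (l ^ Suc e)) (xL e)"
proof -
  have "L e \<in> gr_piece A l e 1" using LG unfolding gr_grade_def by blast
  hence "\<exists>x. x \<in> pideal (l ^ e) \<and> x \<in> A 1 \<and> L e = coset (pideal (l ^ Suc e)) x"
    unfolding gr_piece_def by blast
  from someI_ex[OF this] show "xL e \<in> pideal (l ^ e)" "xL e \<in> A 1" "L e = coset (pideal (l ^ Suc e)) (xL e)"
    unfolding xL_def by blast+
qed

definition PL :: "'a poly" where "PL = (\<Sum>e<R. monom (xL e) e)"

lemma coeff_PL: "coeff PL e = xL e"
proof -
  have "coeff PL e = (\<Sum>e'<R. if e' = e then xL e' else 0)"
    unfolding PL_def coeff_sum coeff_monom by (rule sum.cong) auto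
  also have "\<dots> = (if e < R then xL e else 0)" by (simp add: sum.delta')
  also have "\<dots> = xL e" using xL(1)[of e] pideal_big[of e] by auto
  finally show ?thesis .
qed

definition y where "y d e = coeff (PL ^ d) e"

lemma y_Suc: "y (Suc d) e = (\<Sum>a\<le>e. xL a * y d (e - a))"
  unfolding y_def by (simp add: coeff_mult coeff_PL)

lemma y0: "y 0 e = (if e = 0 then 1 else 0)"
  unfolding y_def by simp

lemma yF: "y d e \<in> pideal (l ^ e) \<and> y d e \<in> A d"
proof (induction d arbitrary: e)
  case 0 thus ?case using one_A0 zeroA by (auto simp: y0)
next
  case (Suc d)
  have "xL a * y d (e - a) \<in> pideal (l ^ e) \<and> xL a * y d (e - a) \<in> A (Suc d)" if "a \<le> e" for a
    using pideal_pow_mult[OF xL(1) Suc.IH[THEN conjunct1], of a "e - a"] mulA[OF xL(2) Suc.IH[THEN conjunct2], of a "e - a"] that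
    by simp
  thus ?case unfolding y_Suc by (auto intro!: pideal_sum sumA)
qed

lemma GM1:
  assumes h: "\<And>j. h j = coset (pideal (l ^ Suc j)) (s j)" and s: "\<And>j. s j \<in> pideal (l ^ j)"
  shows "gr_mult l L h j = coset (pideal (l ^ Suc j)) (\<Sum>a\<le>j. xL a * s (j - a))"
proof -
  have "(\<Sum>a\<le>j. gr_rep (L a) * gr_rep (h (j - a))) - (\<Sum>a\<le>j. xL a * s (j - a)) \<in> pideal (l ^ Suc j)"
    unfolding sum_subtractf[symmetric]
  proof (rule pideal_sum)
    fix a assume "a \<in> {..j}"
    hence a: "a \<le> j" by simp
    define \<alpha> where "\<alpha> = gr_rep (L a) - xL a"
    define \<beta> where "\<beta> = gr_rep (h (j - a)) - s (j - a)"
    have \<alpha>: "\<alpha> \<in> pideal (l ^ Suc a)" unfolding \<alpha>_def xL(3)[of a] by (rule gr_rep_coset)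
    have \<beta>: "\<beta> \<in> pideal (l ^ Suc (j - a))" unfolding \<beta>_def h by (rule gr_rep_coset)
    have eq: "gr_rep (L a) * gr_rep (h (j - a)) - xL a * s (j - a) = xL a * \<beta> + \<alpha> * s (j - a) + \<alpha> * \<beta>"
      unfolding \<alpha>_def \<beta>_def by (simp add: algebra_simps)
    have e1: "a + Suc (j - a) = Suc j" "Suc a + (j - a) = Suc j" using a by auto
    have 1: "xL a * \<beta> \<in> pideal (l ^ Suc j)" using pideal_pow_mult[OF xL(1)[of a] \<beta>] unfolding e1 .
    have 2: "\<alpha> * s (j - a) \<in> pideal (l ^ Suc j)" using pideal_pow_mult[OF \<alpha> s[of "j - a"]] unfolding e1 .
    have 3: "\<alpha> * \<beta> \<in> pideal (l ^ Suc j)"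
      using pideal_pow_mult[OF \<alpha> \<beta>] pideal_pow_mono[of "Suc j" "Suc a + Suc (j - a)" l] a by auto
    show "gr_rep (L a) * gr_rep (h (j - a)) - xL a * s (j - a) \<in> pideal (l ^ Suc j)"
      unfolding eq by (intro pideal_add 1 2 3)
  qed
  thus ?thesis unfolding gr_mult_def coset_eq[symmetric] by simp
qed

lemma triangle:
  fixes x Y r :: "nat \<Rightarrow> 'a"
  shows "(\<Sum>a\<le>j. x a * (\<Sum>e\<le>j - a. Y e * r (j - a - e))) = (\<Sum>f\<le>j. (\<Sum>a\<le>f. x a * Y (f - a)) * r (j - f))"
proof -
  define g where "g a e = x a * Y e * r (j - (a + e))" for a e
  have "(\<Sum>a\<le>j. x a * (\<Sum>e\<le>j - a. Y e * r (j - a - e))) = (\<Sum>a\<le>j. \<Sum>e\<le>j - a. g a e)"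
    unfolding g_def sum_distrib_left by (simp add: mult.assoc diff_diff_left)
  also have "\<dots> = (\<Sum>(a, e)\<in>Sigma {..j} (\<lambda>a. {..j - a}). g a e)"
    by (rule sum.Sigma) auto
  also have "Sigma {..j} (\<lambda>a. {..j - a}) = {(a, e). a + e \<le> j}" by auto
  also have "(\<Sum>(a, e)\<in>{(a, e). a + e \<le> j}. g a e) = (\<Sum>f\<le>j. \<Sum>a\<le>f. g a (f - a))"
    by (rule sum.triangle_reindex_eq)
  also have "\<dots> = (\<Sum>f\<le>j. (\<Sum>a\<le>f. x a * Y (f - a)) * r (j - f))"
    unfolding sum_distrib_right g_def by (intro sum.cong refl) (simp add: mult.assoc)
  finally show ?thesis .
qed

lemma GMd:
  assumes h: "\<And>j. h j = coset (pideal (l ^ Suc j)) (s j)" and s: "\<And>j. s j \<in> pideal (l ^ j)"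
  shows "(gr_mult l L ^^ d) h j = coset (pideal (l ^ Suc j)) (\<Sum>e\<le>j. y d e * s (j - e))"
proof (induction d arbitrary: j)
  case 0
  have "(\<Sum>e\<le>j. y 0 e * s (j - e)) = s j" by (simp add: y0 if_distrib[of "\<lambda>u. u * _"] sum.delta cong: if_cong)
  thus ?case using h by simp
next
  case (Suc d)
  have s': "(\<Sum>e\<le>j. y d e * s (j - e)) \<in> pideal (l ^ j)" for j
  proof (rule pideal_sum)
    fix i assume "i \<in> {..j}"
    hence "i + (j - i) = j" by simp
    thus "y d i * s (j - i) \<in> pideal (l ^ j)" using pideal_pow_mult[OF yF[THEN conjunct1] s, of d i "j - i"] by simp
  qed
  have "(gr_mult l L ^^ Suc d) h j = gr_mult l L ((gr_mult l L ^^ d) h) j" by simp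
  also have "\<dots> = coset (pideal (l ^ Suc j)) (\<Sum>a\<le>j. xL a * (\<Sum>e\<le>j - a. y d e * s (j - a - e)))"
    by (rule GM1[OF Suc.IH s'])
  also have "(\<Sum>a\<le>j. xL a * (\<Sum>e\<le>j - a. y d e * s (j - a - e))) = (\<Sum>f\<le>j. y (Suc d) f * s (j - f))"
    unfolding triangle y_Suc ..
  finally show ?case .
qed

end



context grl
begin

definition iota where "iota c = S c 1"

lemma iota_mult: "iota (a * b) = iota a * iota b"
  unfolding iota_def by (metis kalg mult_1_left vs.scale_scale)

lemma iota_pow: "iota a ^ e = iota (a ^ e)"
proof (induction e)
  case 0 thus ?case by (simp add: iota_def)
next
  case (Suc e) thus ?case by (simp add: iota_mult)
qed

lemma mult_iota: "x * iota c = S c x"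
  unfolding iota_def by (metis kalg2 mult_1_right)

definition u where "u t = poly PL (iota (inverse t))"

lemma upow: "u t ^ d = (\<Sum>e\<le>degree (PL ^ d). S (inverse t ^ e) (y d e))"
proof -
  have "u t ^ d = poly (PL ^ d) (iota (inverse t))" unfolding u_def by simp
  also have "\<dots> = (\<Sum>e\<le>degree (PL ^ d). y d e * iota (inverse t) ^ e)"
    unfolding poly_altdef y_def ..
  also have "\<dots> = (\<Sum>e\<le>degree (PL ^ d). S (inverse t ^ e) (y d e))"
    by (simp add: iota_pow mult_iota)
  finally show ?thesis .
qed

lemma upowA: "u t ^ d \<in> A d"
  unfolding upow by (rule sumA) (use yF scaleA in blast)

lemma uA: "u t \<in> A 1"
  using upowA[of t 1] by simp

lemma funpow_mult: "((*) c ^^ d) x = c ^ d * (x :: 'a)"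
proof (induction d)
  case 0 thus ?case by simp
next
  case (Suc d) thus ?case by (simp add: mult.assoc)
qed

definition bas where "bas i = (SOME B. finite B \<and> vs.independent B \<and> B \<subseteq> A i \<and> A i \<subseteq> vs.span B \<and>
    (\<forall>j. pideal (l ^ j) \<inter> A i \<subseteq> vs.span (B \<inter> pideal (l ^ j))))"

lemma bas: "finite (bas i)" "vs.independent (bas i)" "bas i \<subseteq> A i" "A i \<subseteq> vs.span (bas i)"
  "pideal (l ^ j) \<inter> A i \<subseteq> vs.span (bas i \<inter> pideal (l ^ j))"
proof -
  let ?F = "\<lambda>j. pideal (l ^ j) \<inter> A i"
  obtain B0 where B0: "finite B0" "A i = vs.span B0" using findim by blast
  have "\<exists>B. finite B \<and> vs.independent B \<and> B \<subseteq> ?F 0 \<and> ?F 0 \<subseteq> vs.span B \<and> (\<forall>j. ?F j \<subseteq> vs.span (B \<inter> ?F j))"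
  proof (rule adapted[OF B0(1)])
    show "?F 0 \<subseteq> vs.span B0" using B0 by auto
    show "vs.subspace (?F j)" for j by (intro vs.subspace_inter pideal_subspace sub)
    show "?F (Suc j) \<subseteq> ?F j" for j using pideal_pow_mono[of j "Suc j" l] by auto
    show "?F j = {0}" if "j \<ge> R" for j using pideal_big[OF that] zeroA by auto
  qed
  then obtain B where B: "finite B" "vs.independent B" "B \<subseteq> A i" "A i \<subseteq> vs.span B"
     "\<forall>j. ?F j \<subseteq> vs.span (B \<inter> ?F j)" by auto
  have "B \<inter> ?F j = B \<inter> pideal (l ^ j)" for j using B(3) by auto
  hence "finite B \<and> vs.independent B \<and> B \<subseteq> A i \<and> A i \<subseteq> vs.span B \<and>
    (\<forall>j. pideal (l ^ j) \<inter> A i \<subseteq> vs.span (B \<inter> pideal (l ^ j)))" using B by auto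
  hence "finite (bas i) \<and> vs.independent (bas i) \<and> bas i \<subseteq> A i \<and> A i \<subseteq> vs.span (bas i) \<and>
    (\<forall>j. pideal (l ^ j) \<inter> A i \<subseteq> vs.span (bas i \<inter> pideal (l ^ j)))"
    unfolding bas_def by (rule someI)
  thus "finite (bas i)" "vs.independent (bas i)" "bas i \<subseteq> A i" "A i \<subseteq> vs.span (bas i)"
    "pideal (l ^ j) \<inter> A i \<subseteq> vs.span (bas i \<inter> pideal (l ^ j))" by auto
qed

lemma bas_nz: "b \<in> bas i \<Longrightarrow> b \<noteq> 0"
  using bas(2) vs.dependent_zero by blast

lemma span_bas: "vs.span (bas i) = A i"
  using bas(4)[of i] vs.span_minimal[OF bas(3)[of i] sub[of i]] by blast

definition lev where "lev b = (GREATEST j. b \<in> pideal (l ^ j))"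

lemma lev: assumes "b \<noteq> 0" shows "b \<in> pideal (l ^ j) \<longleftrightarrow> j \<le> lev b"
proof -
  have bd: "j' \<le> R" if "b \<in> pideal (l ^ j')" for j'
    using that assms pideal_big[of j'] by (cases "j' \<ge> R") auto
  have P0: "b \<in> pideal (l ^ 0)" by simp
  have "b \<in> pideal (l ^ lev b)" unfolding lev_def by (rule GreatestI_nat[where P="\<lambda>j. b \<in> pideal (l ^ j)", OF P0 bd])
  moreover have "j \<le> lev b" if "b \<in> pideal (l ^ j)" unfolding lev_def by (rule Greatest_le_nat[where P="\<lambda>j. b \<in> pideal (l ^ j)", OF that bd])
  ultimately show ?thesis using pideal_pow_mono[of j "lev b" l] by auto
qed

definition rep where "rep i w b = vs.representation (bas i) w b"

lemma rep_expand: "w \<in> A i \<Longrightarrow> w = (\<Sum>b\<in>bas i. S (rep i w b) b)"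
  unfolding rep_def using vs.sum_representation_eq[OF bas(2)[of i], of w "bas i"] bas(1) span_bas by auto

lemma rep_eq: "w \<in> A i \<Longrightarrow> w' \<in> A i \<Longrightarrow> (\<And>b. b \<in> bas i \<Longrightarrow> rep i w b = rep i w' b) \<Longrightarrow> w = w'"
  using rep_expand[of w i] rep_expand[of w' i] by (metis (no_types, lifting) sum.cong)

lemma rep_sum: "(\<And>k. k \<in> K \<Longrightarrow> f k \<in> A i) \<Longrightarrow> rep i (\<Sum>k\<in>K. f k) b = (\<Sum>k\<in>K. rep i (f k) b)"
  unfolding rep_def using vs.representation_sum[OF bas(2)[of i], of K f] span_bas by auto

lemma rep_scale: "w \<in> A i \<Longrightarrow> rep i (S c w) b = c * rep i w b"
  unfolding rep_def using vs.representation_scale[OF bas(2)[of i], of w c] span_bas by auto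

lemma rep_diff: "w \<in> A i \<Longrightarrow> w' \<in> A i \<Longrightarrow> rep i (w - w') b = rep i w b - rep i w' b"
  unfolding rep_def using vs.representation_diff[OF bas(2)[of i], of w' w] span_bas by auto

lemma rep_zero: "rep i 0 b = 0"
  unfolding rep_def by (simp add: vs.representation_zero)

lemma rep_basis: "b' \<in> bas i \<Longrightarrow> rep i b' b = (if b = b' then 1 else 0)"
  unfolding rep_def using vs.representation_basis[OF bas(2)[of i]] by auto

lemma K0: assumes "w \<in> pideal (l ^ j)" "w \<in> A i" "b \<in> bas i" "\<not> j \<le> lev b"
  shows "rep i w b = 0"
proof -
  have w: "w \<in> vs.span (bas i \<inter> pideal (l ^ j))" using bas(5)[of j i] assms by auto
  have "rep i w b = vs.representation (bas i \<inter> pideal (l ^ j)) w b"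
    unfolding rep_def using vs.representation_extend[OF bas(2) w] by auto
  moreover have "b \<notin> pideal (l ^ j)" using lev[OF bas_nz[OF assms(3)]] assms(4) by auto
  ultimately show ?thesis using vs.representation_ne_zero by auto
qed

lemma K2: assumes "w \<in> A i" "\<And>b. b \<in> bas i \<Longrightarrow> \<not> j \<le> lev b \<Longrightarrow> rep i w b = 0"
  shows "w \<in> pideal (l ^ j)"
proof -
  have "(\<Sum>b\<in>bas i. S (rep i w b) b) \<in> pideal (l ^ j)"
  proof (rule pideal_sum)
    fix b assume b: "b \<in> bas i"
    show "S (rep i w b) b \<in> pideal (l ^ j)"
    proof (cases "j \<le> lev b")
      case True thus ?thesis using lev[OF bas_nz[OF b]] pideal_scale by blast
    next
      case False thus ?thesis using assms(2)[OF b] by simp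
    qed
  qed
  thus ?thesis using rep_expand[OF assms(1)] by simp
qed

end



context grl
begin

definition NN where "NN i d q p = (if lev p \<le> lev q then
   (\<Sum>e\<le>lev q - lev p. monom (rep (i + d) (y d e * p) q) (lev q - lev p - e)) else 0)"

lemma prodA: "p \<in> A i \<Longrightarrow> y d e * p \<in> A (i + d)"
  using mulA[OF yF[THEN conjunct2] , of p i d e] by (simp add: add.commute)

lemma prodF: "p \<in> bas i \<Longrightarrow> y d e * p \<in> pideal (l ^ (e + lev p))"
  using pideal_pow_mult[OF yF[THEN conjunct1], of p "lev p" d e] lev[OF bas_nz] by blast

lemma N0: "poly (NN i d q p) 0 = (if lev p \<le> lev q then rep (i + d) (y d (lev q - lev p) * p) q else 0)"
proof (cases "lev p \<le> lev q")
  case True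
  define M where "M = lev q - lev p"
  define c where "c e = rep (i + d) (y d e * p) q" for e
  have "poly (NN i d q p) 0 = (\<Sum>e\<le>M. c e * 0 ^ (M - e))"
    using True unfolding NN_def M_def c_def by (simp add: poly_sum poly_monom)
  also have "\<dots> = (\<Sum>e\<le>M. if e = M then c e else 0)"
    by (rule sum.cong) auto
  also have "\<dots> = c M" by simp
  finally show ?thesis using True unfolding M_def c_def by simp
next
  case False thus ?thesis unfolding NN_def by simp
qed

lemma Nt:
  assumes t: "t \<noteq> 0" and p: "p \<in> bas i" and q: "q \<in> bas (i + d)"
  shows "rep (i + d) (u t ^ d * p) q * t ^ lev q = t ^ lev p * poly (NN i d q p) t"
proof -
  define c where "c e = rep (i + d) (y d e * p) q" for e
  define Dg where "Dg = degree (PL ^ d)"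
  have pA: "p \<in> A i" using p bas(3) by blast
  have "u t ^ d * p = (\<Sum>e\<le>Dg. S (inverse t ^ e) (y d e * p))"
    unfolding upow Dg_def sum_distrib_right by (simp add: kalg)
  hence rw: "rep (i + d) (u t ^ d * p) q = (\<Sum>e\<le>Dg. inverse t ^ e * c e)"
    unfolding c_def by (simp add: rep_sum scaleA prodA[OF pA] rep_scale)
  have cz1: "c e = 0" if "e > Dg" for e
  proof -
    have "y d e = 0" unfolding y_def using that Dg_def by (simp add: coeff_eq_0)
    thus ?thesis unfolding c_def by (simp add: rep_zero)
  qed
  have cz2: "c e = 0" if "lev p + e > lev q" for e
    unfolding c_def by (rule K0[OF prodF[OF p] prodA[OF pA] q]) (use that in simp)
  show ?thesis
  proof (cases "lev p \<le> lev q")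
    case True
    define M where "M = lev q - lev p"
    have "(\<Sum>e\<le>Dg. inverse t ^ e * c e) = (\<Sum>e\<le>Dg + M. inverse t ^ e * c e)"
      by (rule sum.mono_neutral_left) (auto simp: cz1)
    also have "\<dots> = (\<Sum>e\<le>M. inverse t ^ e * c e)"
    proof (rule sum.mono_neutral_right)
      show "\<forall>e\<in>{..Dg + M} - {..M}. inverse t ^ e * c e = 0"
      proof
        fix e assume "e \<in> {..Dg + M} - {..M}"
        hence "lev p + e > lev q" using True unfolding M_def by auto
        thus "inverse t ^ e * c e = 0" using cz2 by simp
      qed
    qed auto
    finally have 1: "(\<Sum>e\<le>Dg. inverse t ^ e * c e) = (\<Sum>e\<le>M. inverse t ^ e * c e)" .
    have 2: "t ^ M * (inverse t ^ e * c e) = c e * t ^ (M - e)" if "e \<le> M" for e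
    proof -
      have "t ^ M = t ^ (M - e) * t ^ e" using that by (simp add: power_add[symmetric])
      moreover have "t ^ e * inverse t ^ e = 1" using t by (simp add: power_inverse[symmetric] field_simps)
      ultimately show ?thesis by (simp add: algebra_simps)
    qed
    have "rep (i + d) (u t ^ d * p) q * t ^ lev q = t ^ lev p * (t ^ M * (\<Sum>e\<le>M. inverse t ^ e * c e))"
      unfolding rw 1 using True by (simp add: M_def power_add[symmetric] algebra_simps)
    also have "t ^ M * (\<Sum>e\<le>M. inverse t ^ e * c e) = (\<Sum>e\<le>M. c e * t ^ (M - e))"
      unfolding sum_distrib_left by (rule sum.cong) (auto simp: 2)
    also have "\<dots> = poly (NN i d q p) t"
      using True unfolding NN_def M_def c_def by (simp add: poly_sum poly_monom)
    finally show ?thesis .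
  next
    case False
    have "rep (i + d) (u t ^ d * p) q = 0" unfolding rw using False by (simp add: cz2)
    thus ?thesis using False unfolding NN_def by simp
  qed
qed

lemma KI:
  assumes r: "\<And>k. r k \<in> pideal (l ^ k) \<and> r k \<in> A i" and q: "q \<in> bas (i + d)" and j: "lev q = j"
  shows "rep (i + d) (\<Sum>e\<le>j. y d e * r (j - e)) q = (\<Sum>p\<in>bas i. poly (NN i d q p) 0 * rep i (r (lev p)) p)"
proof -
  define a where "a e p = rep i (r (j - e)) p * rep (i + d) (y d e * p) q" for e p
  define b where "b p = rep i (r (lev p)) p * rep (i + d) (y d (j - lev p) * p) q" for p
  have pA: "p \<in> A i" if "p \<in> bas i" for p using that bas(3) by blast
  have step: "rep (i + d) (y d e * r (j - e)) q = (\<Sum>p\<in>bas i. a e p)" for e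
  proof -
    have "y d e * r (j - e) = (\<Sum>p\<in>bas i. S (rep i (r (j - e)) p) (y d e * p))"
      by (subst rep_expand[OF r[THEN conjunct2], of "j - e"]) (simp add: sum_distrib_left kalg2)
    thus ?thesis unfolding a_def by (simp add: rep_sum scaleA prodA pA rep_scale)
  qed
  have ae: "a e p = (if e = j - lev p then (if lev p \<le> j then b p else 0) else 0)" if "e \<le> j" "p \<in> bas i" for e p
  proof (cases "lev p = j - e")
    case True thus ?thesis using that unfolding a_def b_def by auto
  next
    case False
    show ?thesis
    proof (cases "lev p < j - e")
      case True
      have "rep i (r (j - e)) p = 0" by (rule K0[OF r[THEN conjunct1] r[THEN conjunct2] that(2)]) (use True in simp)
      thus ?thesis using False that unfolding a_def by auto
    next
      case False2: False
      have "rep (i + d) (y d e * p) q = 0"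
        by (rule K0[OF prodF[OF that(2)] prodA[OF pA[OF that(2)]] q]) (use False False2 j that in simp)
      thus ?thesis using False that unfolding a_def by auto
    qed
  qed
  have "rep (i + d) (\<Sum>e\<le>j. y d e * r (j - e)) q = (\<Sum>e\<le>j. \<Sum>p\<in>bas i. a e p)"
  proof -
    have "rep (i + d) (\<Sum>e\<le>j. y d e * r (j - e)) q = (\<Sum>e\<le>j. rep (i + d) (y d e * r (j - e)) q)"
      by (rule rep_sum) (rule prodA[OF r[THEN conjunct2]])
    thus ?thesis by (simp add: step)
  qed
  also have "\<dots> = (\<Sum>e\<le>j. \<Sum>p\<in>bas i. if e = j - lev p then (if lev p \<le> j then b p else 0) else 0)"
    by (intro sum.cong refl) (simp add: ae)
  also have "\<dots> = (\<Sum>p\<in>bas i. \<Sum>e\<le>j. if e = j - lev p then (if lev p \<le> j then b p else 0) else 0)"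
    by (rule sum.swap)
  also have "\<dots> = (\<Sum>p\<in>bas i. if lev p \<le> j then b p else 0)"
    by (intro sum.cong refl) (simp add: sum.delta')
  also have "\<dots> = (\<Sum>p\<in>bas i. poly (NN i d q p) 0 * rep i (r (lev p)) p)"
    by (intro sum.cong refl) (simp add: N0 j b_def mult.commute)
  finally show ?thesis .
qed

definition mkG where "mkG r = (\<lambda>j. coset (pideal (l ^ Suc j)) (r j))"

lemma mkG_in: "(\<And>k. r k \<in> pideal (l ^ k) \<and> r k \<in> A i) \<Longrightarrow> mkG r \<in> gr_grade A l i"
  unfolding mkG_def gr_grade_def gr_piece_def by blast

lemma Psi_mkG:
  assumes "\<And>k. r k \<in> pideal (l ^ k)"
  shows "(gr_mult l L ^^ d) (mkG r) j = coset (pideal (l ^ Suc j)) (\<Sum>e\<le>j. y d e * r (j - e))"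
  by (rule GMd) (auto simp: mkG_def assms)

end



context grl
begin

lemma inj_transfer:
  assumes inj: "inj_on (gr_mult l L ^^ d) (gr_grade A l i)"
  shows "\<forall>z. (\<forall>q\<in>bas (i + d). (\<Sum>p\<in>bas i. poly (NN i d q p) 0 * z p) = 0) \<longrightarrow> (\<forall>p\<in>bas i. z p = 0)"
proof (intro allI impI ballI)
  fix z p assume hz: "\<forall>q\<in>bas (i + d). (\<Sum>p\<in>bas i. poly (NN i d q p) 0 * z p) = 0" and p: "p \<in> bas i"
  define r where "r k = (\<Sum>p'\<in>{p'\<in>bas i. lev p' = k}. S (z p') p')" for k
  have r: "r k \<in> pideal (l ^ k) \<and> r k \<in> A i" for k
  proof
    show "r k \<in> pideal (l ^ k)" unfolding r_def
      by (rule pideal_sum) (auto intro!: pideal_scale simp: lev[OF bas_nz])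
    show "r k \<in> A i" unfolding r_def by (rule sumA) (use bas(3) scaleA in blast)
  qed
  have rr: "rep i (r (lev p')) p' = z p'" if "p' \<in> bas i" for p'
  proof -
    have "rep i (r (lev p')) p' = (\<Sum>p''\<in>{p''\<in>bas i. lev p'' = lev p'}. rep i (S (z p'') p'') p')"
      unfolding r_def by (rule rep_sum) (use bas(3) scaleA in blast)
    also have "\<dots> = (\<Sum>p''\<in>{p''\<in>bas i. lev p'' = lev p'}. z p'' * (if p' = p'' then 1 else 0))"
    proof (rule sum.cong)
      fix x assume "x \<in> {p''\<in>bas i. lev p'' = lev p'}"
      hence x: "x \<in> bas i" by simp
      hence "x \<in> A i" using bas(3) by blast
      thus "rep i (S (z x) x) p' = z x * (if p' = x then 1 else 0)" by (simp add: rep_scale rep_basis[OF x])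
    qed simp
    also have "\<dots> = z p'" using that bas(1)[of i] by (simp add: if_distrib[of "\<lambda>u. _ * u"] sum.delta cong: if_cong)
    finally show ?thesis .
  qed
  define T where "T j = (\<Sum>e\<le>j. y d e * r (j - e))" for j
  have TA: "T j \<in> A (i + d)" for j unfolding T_def by (rule sumA) (rule prodA[OF r[THEN conjunct2]])
  have TF: "T j \<in> pideal (l ^ j)" for j unfolding T_def
  proof (rule pideal_sum)
    fix e assume "e \<in> {..j}"
    hence "e + (j - e) = j" by simp
    thus "y d e * r (j - e) \<in> pideal (l ^ j)" using pideal_pow_mult[OF yF[THEN conjunct1] r[THEN conjunct1], of d e "j - e"] by simp
  qed
  have T1: "T j \<in> pideal (l ^ Suc j)" for j
  proof (rule K2[OF TA])
    fix b assume b: "b \<in> bas (i + d)" and nb: "\<not> Suc j \<le> lev b"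
    show "rep (i + d) (T j) b = 0"
    proof (cases "lev b = j")
      case True
      have "rep (i + d) (T j) b = (\<Sum>p\<in>bas i. poly (NN i d b p) 0 * rep i (r (lev p)) p)"
        unfolding T_def by (rule KI[OF r b True])
      also have "\<dots> = (\<Sum>p\<in>bas i. poly (NN i d b p) 0 * z p)" by (intro sum.cong refl) (simp add: rr)
      also have "\<dots> = 0" using hz b by blast
      finally show ?thesis .
    next
      case False
      thus ?thesis using nb by (intro K0[OF TF TA b]) auto
    qed
  qed
  have eq: "(gr_mult l L ^^ d) (mkG r) = (gr_mult l L ^^ d) (mkG (\<lambda>_. 0))"
  proof
    fix j
    have "(gr_mult l L ^^ d) (mkG r) j = coset (pideal (l ^ Suc j)) (T j)"
      unfolding T_def by (rule Psi_mkG) (use r in blast)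
    also have "\<dots> = coset (pideal (l ^ Suc j)) 0" unfolding coset_eq using T1 by simp
    also have "\<dots> = (gr_mult l L ^^ d) (mkG (\<lambda>_. 0)) j"
      by (subst Psi_mkG) simp_all
    finally show "(gr_mult l L ^^ d) (mkG r) j = (gr_mult l L ^^ d) (mkG (\<lambda>_. 0)) j" .
  qed
  have "mkG r = mkG (\<lambda>_. 0)"
  proof -
    have m1: "mkG r \<in> gr_grade A l i" by (rule mkG_in) (use r in blast)
    have m2: "mkG (\<lambda>_. 0) \<in> gr_grade A l i" by (rule mkG_in) (simp add: zeroA)
    show ?thesis using inj m1 m2 eq unfolding inj_on_def by blast
  qed
  hence "coset (pideal (l ^ Suc (lev p))) (r (lev p)) = coset (pideal (l ^ Suc (lev p))) 0"
    unfolding mkG_def by meson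
  hence "r (lev p) \<in> pideal (l ^ Suc (lev p))" unfolding coset_eq by simp
  hence "rep i (r (lev p)) p = 0" by (rule K0[OF _ r[THEN conjunct2] p]) simp
  thus "z p = 0" using rr[OF p] by simp
qed

lemma surj_transfer:
  assumes surj: "(gr_mult l L ^^ d) ` (gr_grade A l i) = gr_grade A l (i + d)"
  shows "\<forall>Y. \<exists>z. \<forall>q\<in>bas (i + d). (\<Sum>p\<in>bas i. poly (NN i d q p) 0 * z p) = Y q"
proof
  fix Y
  define H where "H k = (\<Sum>q'\<in>{q'\<in>bas (i + d). lev q' = k}. S (Y q') q')" for k
  have H: "H k \<in> pideal (l ^ k) \<and> H k \<in> A (i + d)" for k
  proof
    show "H k \<in> pideal (l ^ k)" unfolding H_def
      by (rule pideal_sum) (auto intro!: pideal_scale simp: lev[OF bas_nz])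
    show "H k \<in> A (i + d)" unfolding H_def by (rule sumA) (use bas(3) scaleA in blast)
  qed
  have HH: "rep (i + d) (H (lev q)) q = Y q" if "q \<in> bas (i + d)" for q
  proof -
    have "rep (i + d) (H (lev q)) q = (\<Sum>q''\<in>{q''\<in>bas (i + d). lev q'' = lev q}. rep (i + d) (S (Y q'') q'') q)"
      unfolding H_def by (rule rep_sum) (use bas(3) scaleA in blast)
    also have "\<dots> = (\<Sum>q''\<in>{q''\<in>bas (i + d). lev q'' = lev q}. Y q'' * (if q = q'' then 1 else 0))"
    proof (rule sum.cong)
      fix x assume "x \<in> {q''\<in>bas (i + d). lev q'' = lev q}"
      hence x: "x \<in> bas (i + d)" by simp
      hence "x \<in> A (i + d)" using bas(3) by blast
      thus "rep (i + d) (S (Y x) x) q = Y x * (if q = x then 1 else 0)" by (simp add: rep_scale rep_basis[OF x])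
    qed simp
    also have "\<dots> = Y q" using that bas(1)[of "i + d"] by (simp add: if_distrib[of "\<lambda>u. _ * u"] sum.delta cong: if_cong)
    finally show ?thesis .
  qed
  have "mkG H \<in> gr_grade A l (i + d)" by (rule mkG_in) (use H in blast)
  then obtain g where g: "g \<in> gr_grade A l i" "(gr_mult l L ^^ d) g = mkG H" using surj by force
  have "\<forall>k. \<exists>r. r \<in> pideal (l ^ k) \<and> r \<in> A i \<and> g k = coset (pideal (l ^ Suc k)) r"
    using g(1) unfolding gr_grade_def gr_piece_def by blast
  then obtain r where r: "\<And>k. r k \<in> pideal (l ^ k) \<and> r k \<in> A i" and gr: "\<And>k. g k = coset (pideal (l ^ Suc k)) (r k)"
    by metis
  have gm: "g = mkG r" unfolding mkG_def using gr by auto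
  show "\<exists>z. \<forall>q\<in>bas (i + d). (\<Sum>p\<in>bas i. poly (NN i d q p) 0 * z p) = Y q"
  proof (intro exI ballI)
    fix q assume q: "q \<in> bas (i + d)"
    define j where "j = lev q"
    define T where "T = (\<Sum>e\<le>j. y d e * r (j - e))"
    have TA: "T \<in> A (i + d)" unfolding T_def by (rule sumA) (rule prodA[OF r[THEN conjunct2]])
    have "(gr_mult l L ^^ d) (mkG r) j = coset (pideal (l ^ Suc j)) T"
      unfolding T_def by (rule Psi_mkG) (use r in blast)
    hence "coset (pideal (l ^ Suc j)) T = mkG H j"
      using g(2) gm by simp
    hence "T - H j \<in> pideal (l ^ Suc j)" unfolding mkG_def coset_eq by simp
    hence "rep (i + d) (T - H j) q = 0" by (rule K0[OF _ diffA[OF TA H[THEN conjunct2]] q]) (simp add: j_def)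
    hence "rep (i + d) T q = Y q" using HH[OF q] by (simp add: rep_diff[OF TA H[THEN conjunct2]] j_def)
    moreover have "rep (i + d) T q = (\<Sum>p\<in>bas i. poly (NN i d q p) 0 * rep i (r (lev p)) p)"
      unfolding T_def by (rule KI[OF r q]) (simp add: j_def)
    ultimately show "(\<Sum>p\<in>bas i. poly (NN i d q p) 0 * rep i (r (lev p)) p) = Y q" by simp
  qed
qed

end



context grl
begin

lemma wp_A: "p \<in> A i \<Longrightarrow> u t ^ d * p \<in> A (i + d)"
  using mulA[OF upowA, of p i t d] by (simp add: add.commute)

lemma rep_wv:
  assumes v: "v \<in> A i" and q: "q \<in> bas (i + d)"
  shows "rep (i + d) (u t ^ d * v) q = (\<Sum>p\<in>bas i. rep i v p * rep (i + d) (u t ^ d * p) q)"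
proof -
  have pA: "p \<in> A i" if "p \<in> bas i" for p using that bas(3) by blast
  have "u t ^ d * v = (\<Sum>p\<in>bas i. S (rep i v p) (u t ^ d * p))"
    by (subst rep_expand[OF v]) (simp add: sum_distrib_left kalg2)
  hence "rep (i + d) (u t ^ d * v) q = (\<Sum>p\<in>bas i. rep (i + d) (S (rep i v p) (u t ^ d * p)) q)"
    by (simp add: rep_sum scaleA wp_A pA)
  also have "\<dots> = (\<Sum>p\<in>bas i. rep i v p * rep (i + d) (u t ^ d * p) q)"
    by (intro sum.cong refl) (simp add: rep_scale wp_A pA)
  finally show ?thesis .
qed

lemma KEY:
  assumes mr: "maximal_rank (gr_mult l L ^^ d) (gr_grade A l i) (gr_grade A l (i + d))"
  shows "\<exists>Sb. finite Sb \<and> (\<forall>t. t \<notin> Sb \<longrightarrow> t \<noteq> 0 \<longrightarrow> maximal_rank ((*) (u t) ^^ d) (A i) (A (i + d)))"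
proof (cases "inj_on (gr_mult l L ^^ d) (gr_grade A l i)")
  case True
  from matinj[OF bas(1)[of i] bas(1)[of "i + d"] inj_transfer[OF True]]
  obtain Sb where Sb: "finite Sb" "\<forall>t. t \<notin> Sb \<longrightarrow> (\<forall>z. (\<forall>q\<in>bas (i + d). (\<Sum>p\<in>bas i. poly (NN i d q p) t * z p) = 0) \<longrightarrow> (\<forall>p\<in>bas i. z p = 0))"
    by blast
  have "maximal_rank ((*) (u t) ^^ d) (A i) (A (i + d))" if t: "t \<notin> Sb" "t \<noteq> 0" for t
    unfolding maximal_rank_def
  proof (rule disjI1, rule inj_onI)
    fix x x' assume x: "x \<in> A i" "x' \<in> A i" and e: "((*) (u t) ^^ d) x = ((*) (u t) ^^ d) x'"
    define v where "v = x - x'"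
    have v: "v \<in> A i" unfolding v_def using x by (rule diffA)
    have wv: "u t ^ d * v = 0" using e unfolding funpow_mult v_def by (simp add: right_diff_distrib)
    define z where "z p = rep i v p * t ^ lev p" for p
    have "\<forall>q\<in>bas (i + d). (\<Sum>p\<in>bas i. poly (NN i d q p) t * z p) = 0"
    proof
      fix q assume q: "q \<in> bas (i + d)"
      have "(\<Sum>p\<in>bas i. poly (NN i d q p) t * z p) = (\<Sum>p\<in>bas i. rep i v p * (rep (i + d) (u t ^ d * p) q * t ^ lev q))"
        by (intro sum.cong refl) (simp add: Nt[OF t(2) _ q] z_def)
      also have "\<dots> = rep (i + d) (u t ^ d * v) q * t ^ lev q"
        unfolding rep_wv[OF v q] sum_distrib_right by (simp add: mult.assoc)
      also have "\<dots> = 0" unfolding wv by (simp add: rep_zero)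
      finally show "(\<Sum>p\<in>bas i. poly (NN i d q p) t * z p) = 0" .
    qed
    hence "\<forall>p\<in>bas i. z p = 0" using Sb(2) t(1) by blast
    hence "\<forall>p\<in>bas i. rep i v p = rep i 0 p" using t(2) by (simp add: z_def rep_zero)
    hence "v = 0" using rep_eq[OF v zeroA] by blast
    thus "x = x'" unfolding v_def by simp
  qed
  thus ?thesis using Sb(1) by blast
next
  case False
  hence surj: "(gr_mult l L ^^ d) ` gr_grade A l i = gr_grade A l (i + d)" using mr unfolding maximal_rank_def by blast
  from matsurj[OF bas(1)[of i] bas(1)[of "i + d"] surj_transfer[OF surj]]
  obtain Sb where Sb: "finite Sb" "\<forall>t. t \<notin> Sb \<longrightarrow> (\<forall>Y. \<exists>z. \<forall>q\<in>bas (i + d). (\<Sum>p\<in>bas i. poly (NN i d q p) t * z p) = Y q)"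
    by blast
  have "maximal_rank ((*) (u t) ^^ d) (A i) (A (i + d))" if t: "t \<notin> Sb" "t \<noteq> 0" for t
    unfolding maximal_rank_def
  proof (rule disjI2, intro equalityI subsetI)
    fix w assume "w \<in> ((*) (u t) ^^ d) ` A i"
    thus "w \<in> A (i + d)" unfolding funpow_mult using wp_A by blast
  next
    fix y0 assume y0: "y0 \<in> A (i + d)"
    obtain z where z: "\<forall>q\<in>bas (i + d). (\<Sum>p\<in>bas i. poly (NN i d q p) t * z p) = rep (i + d) y0 q * t ^ lev q"
      using Sb(2)[rule_format, OF t(1), of "\<lambda>q. rep (i + d) y0 q * t ^ lev q"] by auto
    define x where "x = (\<Sum>p\<in>bas i. S (z p * inverse t ^ lev p) p)"
    have xA: "x \<in> A i" unfolding x_def by (rule sumA) (use bas(3) scaleA in blast)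
    have "u t ^ d * x = y0"
    proof (rule rep_eq[OF wp_A[OF xA] y0])
      fix q assume q: "q \<in> bas (i + d)"
      have rx: "rep i x p = z p * inverse t ^ lev p" if p: "p \<in> bas i" for p
      proof -
        have "rep i x p = (\<Sum>p'\<in>bas i. rep i (S (z p' * inverse t ^ lev p') p') p)"
          unfolding x_def by (rule rep_sum) (use bas(3) scaleA in blast)
        also have "\<dots> = (\<Sum>p'\<in>bas i. (z p' * inverse t ^ lev p') * (if p = p' then 1 else 0))"
        proof (rule sum.cong)
          fix p' assume p': "p' \<in> bas i"
          hence "p' \<in> A i" using bas(3) by blast
          thus "rep i (S (z p' * inverse t ^ lev p') p') p = (z p' * inverse t ^ lev p') * (if p = p' then 1 else 0)"
            by (simp add: rep_scale rep_basis[OF p'])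
        qed simp
        also have "\<dots> = z p * inverse t ^ lev p" using p bas(1)[of i]
          by (simp add: if_distrib[of "\<lambda>u. _ * u"] sum.delta cong: if_cong)
        finally show ?thesis .
      qed
      have "rep (i + d) (u t ^ d * x) q * t ^ lev q = (\<Sum>p\<in>bas i. z p * inverse t ^ lev p * (rep (i + d) (u t ^ d * p) q * t ^ lev q))"
        unfolding rep_wv[OF xA q] sum_distrib_right by (intro sum.cong refl) (simp add: rx mult.assoc)
      also have "\<dots> = (\<Sum>p\<in>bas i. poly (NN i d q p) t * z p)"
      proof (intro sum.cong refl)
        fix p assume p: "p \<in> bas i"
        have "inverse t ^ lev p * t ^ lev p = 1" using t(2) by (simp add: power_inverse[symmetric] field_simps)
        thus "z p * inverse t ^ lev p * (rep (i + d) (u t ^ d * p) q * t ^ lev q) = poly (NN i d q p) t * z p"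
        proof -
          have "z p * inverse t ^ lev p * (rep (i + d) (u t ^ d * p) q * t ^ lev q) = z p * (inverse t ^ lev p * t ^ lev p) * poly (NN i d q p) t"
            unfolding Nt[OF t(2) p q] by (simp only: mult.assoc)
          also have "\<dots> = poly (NN i d q p) t * z p"
            unfolding \<open>inverse t ^ lev p * t ^ lev p = 1\<close> by (simp add: mult.commute)
          finally show ?thesis .
        qed
      qed
      also have "\<dots> = rep (i + d) y0 q * t ^ lev q" using z q by blast
      finally show "rep (i + d) (u t ^ d * x) q = rep (i + d) y0 q" using t(2) by simp
    qed
    thus "y0 \<in> ((*) (u t) ^^ d) ` A i" unfolding funpow_mult using xA by blast
  qed
  thus ?thesis using Sb(1) by blast
qed

lemma COMB:
  assumes as: "\<forall>d\<in>Ds. \<forall>i. maximal_rank (gr_mult l L ^^ d) (gr_grade A l i) (gr_grade A l (i + d))"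
  shows "\<exists>t. \<forall>d\<in>Ds. \<forall>i. maximal_rank ((*) (u t) ^^ d) (A i) (A (i + d))"
proof -
  obtain N where N: "\<forall>n\<ge>N. A n = {0}" using vanish by blast
  define P where "P i d Sb = (finite Sb \<and> (\<forall>t. t \<notin> Sb \<longrightarrow> t \<noteq> 0 \<longrightarrow> maximal_rank ((*) (u t) ^^ d) (A i) (A (i + d))))" for i d Sb
  define Sb where "Sb i d = (SOME Sb. P i d Sb)" for i d
  have Sb: "P i d (Sb i d)" if "d \<in> Ds" for i d
  proof -
    have "maximal_rank (gr_mult l L ^^ d) (gr_grade A l i) (gr_grade A l (i + d))" using as that by blast
    from KEY[OF this] have "\<exists>Sb. P i d Sb" unfolding P_def .
    thus ?thesis unfolding Sb_def by (rule someI_ex)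
  qed
  define I where "I = {(i, d). i < N \<and> d < N \<and> d \<in> Ds}"
  have fI: "finite I" unfolding I_def by (rule finite_subset[of _ "{..<N} \<times> {..<N}"]) auto
  define Bad where "Bad = insert 0 (\<Union>((\<lambda>(i, d). Sb i d) ` I))"
  have "finite Bad" unfolding Bad_def
  proof (intro finite.insertI finite_Union)
    show "finite ((\<lambda>(i, d). Sb i d) ` I)" using fI by (rule finite_imageI)
    fix M assume "M \<in> (\<lambda>(i, d). Sb i d) ` I"
    then obtain i d where "(i, d) \<in> I" "M = Sb i d" by auto
    hence "d \<in> Ds" "M = Sb i d" unfolding I_def by auto
    thus "finite M" using Sb unfolding P_def by blast
  qed
  then obtain t :: 'k where t: "t \<notin> Bad" using ex_new_if_finite[OF infinite_UNIV_char_0] by blast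
  have "maximal_rank ((*) (u t) ^^ d) (A i) (A (i + d))" if d: "d \<in> Ds" for d i
  proof (cases "i < N \<and> d < N")
    case True
    hence "(i, d) \<in> I" unfolding I_def using d by simp
    hence "t \<notin> Sb i d" "t \<noteq> 0" using t unfolding Bad_def by auto
    thus ?thesis using Sb[OF d, of i] unfolding P_def by blast
  next
    case False
    show ?thesis
    proof (cases "i < N")
      case False
      hence "A i = {0}" using N by auto
      hence "inj_on ((*) (u t) ^^ d) (A i)" by simp
      thus ?thesis unfolding maximal_rank_def ..
    next
      case True
      hence A0: "A (i + d) = {0}" using N \<open>\<not> (i < N \<and> d < N)\<close> by auto
      have "((*) (u t) ^^ d) ` A i = A (i + d)"
      proof
        show "((*) (u t) ^^ d) ` A i \<subseteq> A (i + d)" unfolding funpow_mult using wp_A by blast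
        have "((*) (u t) ^^ d) 0 = 0" unfolding funpow_mult by simp
        thus "A (i + d) \<subseteq> ((*) (u t) ^^ d) ` A i" unfolding A0 using zeroA[of i] by (metis empty_subsetI image_eqI insert_subset)
      qed
      thus ?thesis unfolding maximal_rank_def ..
    qed
  qed
  thus ?thesis by blast
qed

end



context sga
begin

definition G0 :: "'a \<Rightarrow> nat \<Rightarrow> 'a set" where "G0 x = (\<lambda>j. if j = 0 then {x} else {0})"

lemma coset_single0: "coset {0} x = {x}" unfolding coset_def by simp

lemma gr_rep_single: "gr_rep {x} = x" unfolding gr_rep_def by simp

lemma piece0: "gr_piece A 0 j d = (if j = 0 then {{x} | x. x \<in> A d} else {{0}})"
proof (cases "j = 0")
  case True thus ?thesis unfolding gr_piece_def by (simp add: coset_single0)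
next
  case False
  hence "(0::'a) ^ j = 0" by (simp add: power_0_left)
  thus ?thesis unfolding gr_piece_def using False zeroA[of d] by (auto simp: coset_single0)
qed

lemma grade0: "gr_grade A 0 d = G0 ` A d"
proof
  show "gr_grade A 0 d \<subseteq> G0 ` A d"
  proof
    fix g assume "g \<in> gr_grade A 0 d"
    hence g: "g j \<in> gr_piece A 0 j d" for j unfolding gr_grade_def by blast
    obtain x where x: "x \<in> A d" "g 0 = {x}" using g[of 0] unfolding piece0 by auto
    have "g = G0 x"
    proof
      fix j show "g j = G0 x j" using g[of j] x unfolding piece0 G0_def by (cases "j = 0") auto
    qed
    thus "g \<in> G0 ` A d" using x by blast
  qed
  show "G0 ` A d \<subseteq> gr_grade A 0 d"
    unfolding gr_grade_def piece0 G0_def by auto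
qed

lemma mult0: "gr_mult 0 (G0 a) (G0 b) = G0 (a * b)"
proof
  fix j
  show "gr_mult 0 (G0 a) (G0 b) j = G0 (a * b) j"
  proof (cases "j = 0")
    case True thus ?thesis unfolding gr_mult_def G0_def by (simp add: gr_rep_single coset_single0)
  next
    case False
    have "(\<Sum>a'\<le>j. gr_rep (G0 a a') * gr_rep (G0 b (j - a'))) = 0"
      by (rule sum.neutral) (use False in \<open>auto simp: G0_def gr_rep_single\<close>)
    thus ?thesis unfolding gr_mult_def using False by (simp add: G0_def coset_single0)
  qed
qed

lemma iter0: "(gr_mult 0 (G0 a) ^^ d) (G0 x) = G0 (((*) a ^^ d) x)"
  by (induction d) (simp_all add: mult0)

lemma G0_inj: "G0 x = G0 x' \<Longrightarrow> x = x'"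
  unfolding G0_def by (metis singleton_inject)

lemma mr_transfer:
  assumes "maximal_rank ((*) a ^^ d) (A i) (A j)"
  shows "maximal_rank (gr_mult 0 (G0 a) ^^ d) (gr_grade A 0 i) (gr_grade A 0 j)"
  using assms unfolding maximal_rank_def grade0
proof (elim disjE)
  assume inj: "inj_on ((*) a ^^ d) (A i)"
  have "inj_on (gr_mult 0 (G0 a) ^^ d) (G0 ` A i)"
  proof (rule inj_onI)
    fix g g' assume "g \<in> G0 ` A i" "g' \<in> G0 ` A i" and e: "(gr_mult 0 (G0 a) ^^ d) g = (gr_mult 0 (G0 a) ^^ d) g'"
    then obtain x x' where x: "x \<in> A i" "x' \<in> A i" "g = G0 x" "g' = G0 x'" by auto
    have "((*) a ^^ d) x = ((*) a ^^ d) x'" using e unfolding x iter0 by (rule G0_inj)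
    hence "x = x'" using inj x by (meson inj_onD)
    thus "g = g'" using x by simp
  qed
  thus "inj_on (gr_mult 0 (G0 a) ^^ d) (G0 ` A i) \<or> (gr_mult 0 (G0 a) ^^ d) ` G0 ` A i = G0 ` A j" ..
next
  assume surj: "((*) a ^^ d) ` A i = A j"
  have "(gr_mult 0 (G0 a) ^^ d) ` G0 ` A i = G0 ` ((*) a ^^ d) ` A i"
    unfolding image_image iter0 ..
  thus "inj_on (gr_mult 0 (G0 a) ^^ d) (G0 ` A i) \<or> (gr_mult 0 (G0 a) ^^ d) ` G0 ` A i = G0 ` A j"
    using surj by simp
qed

lemma fwdW: "WLP A (*) \<Longrightarrow> \<exists>l\<in>A 1. WLP (gr_grade A l) (gr_mult l)"
proof -
  assume "WLP A (*)"
  then obtain a where a: "a \<in> A 1" "\<forall>i. maximal_rank ((*) a) (A i) (A (Suc i))" unfolding WLP_def by blast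
  have "G0 a \<in> gr_grade A 0 1" unfolding grade0 using a by blast
  moreover have "maximal_rank (gr_mult 0 (G0 a)) (gr_grade A 0 i) (gr_grade A 0 (Suc i))" for i
    using mr_transfer[where a=a and d=1 and i=i and j="Suc i"] a(2) by simp
  ultimately have "WLP (gr_grade A 0) (gr_mult 0)" unfolding WLP_def by blast
  thus ?thesis using zeroA by blast
qed

lemma fwdS: "SLP A (*) \<Longrightarrow> \<exists>l\<in>A 1. SLP (gr_grade A l) (gr_mult l)"
proof -
  assume "SLP A (*)"
  then obtain a where a: "a \<in> A 1" "\<forall>d>0. \<forall>i. maximal_rank ((*) a ^^ d) (A i) (A (i + d))" unfolding SLP_def by blast
  have "G0 a \<in> gr_grade A 0 1" unfolding grade0 using a by blast
  moreover have "maximal_rank (gr_mult 0 (G0 a) ^^ d) (gr_grade A 0 i) (gr_grade A 0 (i + d))" if "d > 0" for i d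
    using mr_transfer a(2) that by blast
  ultimately have "SLP (gr_grade A 0) (gr_mult 0)" unfolding SLP_def by blast
  thus ?thesis using zeroA by blast
qed

lemma bwdW: assumes l: "l \<in> A 1" and W: "WLP (gr_grade A l) (gr_mult l)" shows "WLP A (*)"
proof -
  obtain L where L: "L \<in> gr_grade A l 1" "\<forall>i. maximal_rank (gr_mult l L) (gr_grade A l i) (gr_grade A l (Suc i))"
    using W unfolding WLP_def by blast
  interpret g: grl S A l L by (rule grl.intro[OF sga_axioms grl_axioms.intro[OF l L(1)]])
  have "\<forall>d\<in>{1}. \<forall>i. maximal_rank (gr_mult l L ^^ d) (gr_grade A l i) (gr_grade A l (i + d))"
    using L(2) by simp
  from g.COMB[OF this] obtain t where "\<forall>i. maximal_rank ((*) (g.u t) ^^ 1) (A i) (A (i + 1))" by blast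
  hence "\<forall>i. maximal_rank ((*) (g.u t)) (A i) (A (Suc i))" by simp
  thus ?thesis unfolding WLP_def using g.uA by blast
qed

lemma bwdS: assumes l: "l \<in> A 1" and W: "SLP (gr_grade A l) (gr_mult l)" shows "SLP A (*)"
proof -
  obtain L where L: "L \<in> gr_grade A l 1" "\<forall>d>0. \<forall>i. maximal_rank (gr_mult l L ^^ d) (gr_grade A l i) (gr_grade A l (i + d))"
    using W unfolding SLP_def by blast
  interpret g: grl S A l L by (rule grl.intro[OF sga_axioms grl_axioms.intro[OF l L(1)]])
  have "\<forall>d\<in>{d. d > 0}. \<forall>i. maximal_rank (gr_mult l L ^^ d) (gr_grade A l i) (gr_grade A l (i + d))"
    using L(2) by simp
  from g.COMB[OF this] obtain t where "\<forall>d>0. \<forall>i. maximal_rank ((*) (g.u t) ^^ d) (A i) (A (i + d))" by auto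
  thus ?thesis unfolding SLP_def using g.uA by blast
qed

end

theorem theorem2p12:
  fixes scale :: "'k::field_char_0 \<Rightarrow> 'a::comm_ring_1 \<Rightarrow> 'a"
    and A :: "nat \<Rightarrow> 'a set"
  assumes "standard_graded_artinian_algebra scale A"
  shows "(WLP A (*) \<longleftrightarrow> (\<exists>l\<in>A 1. WLP (gr_grade A l) (gr_mult l)))
       \<and> (SLP A (*) \<longleftrightarrow> (\<exists>l\<in>A 1. SLP (gr_grade A l) (gr_mult l)))"
proof -
  interpret s: sga scale A by (rule sga.intro) (rule assms)
  show ?thesis using s.fwdW s.fwdS s.bwdW s.bwdS by blast
qed


end
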